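(* Let $G$ be a locally compact abelian group, $K$ a compact subgroup, and $\Omega$ an open subgroup containing $K$. Consider the continuous map $$\Phi:\mathcal{S}(G)\to\mathcal{S}(\Omega)\times\mathcal{S}(G/K),\qquad H\mapsto\big(H\cap\Omega,\ (H+K)/K\big).$$ Let $R\in\mathcal{S}(\Omega)$ and let $M$ be a closed subgroup of $G$ containing $K$. Then the fiber $\Phi^{-1}(R,M/K)$ is either empty or homeomorphic to the compact group $\mathrm{Hom}\big((M+\Omega)/\Omega,\ K/(K\cap R)\big)$ (with the topology of pointwise convergence); in particular it is homogeneous.
   Context: $\mathcal{S}(X)$ denotes the space of closed subgroups of a locally compact group $X$ with the Chabauty topology (basic open sets $\{F: F\cap K'=\emptyset,\ F\cap U_i\ne\emptyset\ \forall i\}$, $K'$ compact, $U_i$ open). Homomorphisms are continuous; $(M+\Omega)/\Omega$ is discrete. *)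

theory Defs
  imports "HOL-Analysis.Analysis" "HOL-Algebra.Algebra"
begin

text \<open>Abelian topological groups are written multiplicatively (HOL-Algebra):
  H + K becomes H <#> K, cosets are r-cosets.\<close>

definition topological_group :: "('a, 'b) monoid_scheme \<Rightarrow> 'a topology \<Rightarrow> bool" where
  "topological_group G T \<longleftrightarrow> group G \<and> topspace T = carrier G \<and>
     continuous_map (prod_topology T T) T (\<lambda>(x, y). x \<otimes>\<^bsub>G\<^esub> y) \<and>
     continuous_map T T (\<lambda>x. inv\<^bsub>G\<^esub> x)"

definition LCA_group :: "('a, 'b) monoid_scheme \<Rightarrow> 'a topology \<Rightarrow> bool" where
  "LCA_group G T \<longleftrightarrow> topological_group G T \<and> comm_group G \<and>
     Hausdorff_space T \<and> locally_compact_space T"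

definition closed_subgroups :: "('a, 'b) monoid_scheme \<Rightarrow> 'a topology \<Rightarrow> 'a set set" where
  "closed_subgroups G T = {H. subgroup H G \<and> closedin T H}"

definition chabauty :: "('a, 'b) monoid_scheme \<Rightarrow> 'a topology \<Rightarrow> 'a set topology" where
  "chabauty G T = topology_generated_by
     ({{F \<in> closed_subgroups G T. F \<inter> C = {}} | C. compactin T C} \<union>
      {{F \<in> closed_subgroups G T. F \<inter> U \<noteq> {}} | U. openin T U})"

definition quotient_group_topology ::
  "('a, 'b) monoid_scheme \<Rightarrow> 'a topology \<Rightarrow> 'a set \<Rightarrow> 'a set topology" where
  "quotient_group_topology G T N =
     topology (\<lambda>U. U \<subseteq> rcosets\<^bsub>G\<^esub> N \<and> openin T (\<Union>U))"

definition cont_homs ::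
  "('c, 'd) monoid_scheme \<Rightarrow> 'c topology \<Rightarrow> ('e, 'f) monoid_scheme \<Rightarrow> 'e topology
   \<Rightarrow> ('c \<Rightarrow> 'e) set" where
  "cont_homs D TD E TE = {f \<in> extensional (carrier D). f \<in> hom D E \<and> continuous_map TD TE f}"

definition pointwise_hom_topology ::
  "('c, 'd) monoid_scheme \<Rightarrow> 'c topology \<Rightarrow> ('e, 'f) monoid_scheme \<Rightarrow> 'e topology
   \<Rightarrow> ('c \<Rightarrow> 'e) topology" where
  "pointwise_hom_topology D TD E TE =
     subtopology (product_topology (\<lambda>_. TE) (carrier D)) (cont_homs D TD E TE)"

end

theory Submission
  imports Defs
begin

context comm_group begin
lemma comm4: "a \<in> carrier G \<Longrightarrow> b \<in> carrier G \<Longrightarrow> c \<in> carrier G \<Longrightarrow> d \<in> carrier G \<Longrightarrow> (a \<otimes> b) \<otimes> (c \<otimes> d) = (a \<otimes> c) \<otimes> (b \<otimes> d)"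
  by (simp add: m_ac)
lemma divmix: "a \<in> carrier G \<Longrightarrow> b \<in> carrier G \<Longrightarrow> c \<in> carrier G \<Longrightarrow> d \<in> carrier G \<Longrightarrow> a \<otimes> b \<otimes> inv (c \<otimes> d) = (a \<otimes> inv c) \<otimes> (b \<otimes> inv d)"
  by (simp add: inv_mult m_ac)
lemma solve1: "a \<in> carrier G \<Longrightarrow> b \<in> carrier G \<Longrightarrow> a \<otimes> b \<otimes> inv a = b"
  by (metis inv_closed m_assoc m_comm r_inv r_one)
lemma solve2: "a \<in> carrier G \<Longrightarrow> b \<in> carrier G \<Longrightarrow> a \<otimes> b \<otimes> inv b = a"
  by (metis inv_closed m_assoc r_inv r_one)
lemma solve3: "a \<in> carrier G \<Longrightarrow> b \<in> carrier G \<Longrightarrow> inv a \<otimes> (a \<otimes> b) = b"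
  by (metis inv_closed m_assoc l_inv l_one)
lemma solve4: "a \<in> carrier G \<Longrightarrow> b \<in> carrier G \<Longrightarrow> a \<otimes> (inv a \<otimes> b) = b"
  by (metis inv_closed m_assoc r_inv l_one)
lemma swapeq: "a \<in> carrier G \<Longrightarrow> b \<in> carrier G \<Longrightarrow> c \<in> carrier G \<Longrightarrow> d \<in> carrier G \<Longrightarrow> a \<otimes> b = c \<otimes> d \<Longrightarrow> c \<otimes> inv a = b \<otimes> inv d"
proof -
  assume c: "a \<in> carrier G" "b \<in> carrier G" "c \<in> carrier G" "d \<in> carrier G" and e: "a \<otimes> b = c \<otimes> d"
  have "c \<otimes> inv a = (c \<otimes> d) \<otimes> inv d \<otimes> inv a" using c by (simp add: m_assoc)
  also have "... = (a \<otimes> b) \<otimes> inv d \<otimes> inv a" using e by simp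
  also have "... = b \<otimes> inv d" using c solve1[of a "b \<otimes> inv d"] by (simp add: m_assoc)
  finally show ?thesis .
qed
lemma hC: "h \<in> carrier G \<Longrightarrow> u \<in> carrier G \<Longrightarrow> h \<otimes> (u \<otimes> inv h) = u"
  by (metis inv_closed m_comm solve4)
lemma hA: "r \<in> carrier G \<Longrightarrow> h \<in> carrier G \<Longrightarrow> x \<in> carrier G \<Longrightarrow> inv r \<otimes> h \<otimes> (x \<otimes> r \<otimes> inv h) = x"
proof -
  assume c: "r \<in> carrier G" "h \<in> carrier G" "x \<in> carrier G"
  have "inv r \<otimes> h \<otimes> (x \<otimes> r \<otimes> inv h) = inv r \<otimes> (h \<otimes> ((x \<otimes> r) \<otimes> inv h))" using c by (simp add: m_assoc)
  also have "... = inv r \<otimes> (x \<otimes> r)" using c hC[of h "x \<otimes> r"] by simp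
  also have "... = inv r \<otimes> (r \<otimes> x)" using c m_comm[of x r] by simp
  also have "... = x" using c solve3 by simp
  finally show ?thesis .
qed
lemma hB: "h \<in> carrier G \<Longrightarrow> k \<in> carrier G \<Longrightarrow> h1 \<in> carrier G \<Longrightarrow> h \<otimes> k \<otimes> inv (h \<otimes> inv h1) \<otimes> inv h1 = k"
proof -
  assume c: "h \<in> carrier G" "k \<in> carrier G" "h1 \<in> carrier G"
  have "inv (h \<otimes> inv h1) = inv h \<otimes> h1" using c by (simp add: inv_mult)
  then have "h \<otimes> k \<otimes> inv (h \<otimes> inv h1) \<otimes> inv h1 = (h \<otimes> k \<otimes> inv h) \<otimes> h1 \<otimes> inv h1" using c by (simp add: m_assoc)
  also have "... = h \<otimes> k \<otimes> inv h" using c solve2 by simp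
  also have "... = k" using c solve1 by simp
  finally show ?thesis .
qed
lemma hD: "c \<in> carrier G \<Longrightarrow> r \<in> carrier G \<Longrightarrow> h \<in> carrier G \<Longrightarrow> n \<in> carrier G \<Longrightarrow> (c \<otimes> r \<otimes> inv h) \<otimes> n = c \<otimes> (r \<otimes> n) \<otimes> inv h"
  by (simp add: m_ac)
lemma hE: "x \<in> carrier G \<Longrightarrow> x0 \<in> carrier G \<Longrightarrow> k \<in> carrier G \<Longrightarrow> x \<otimes> inv k \<otimes> inv x0 = (x \<otimes> inv x0) \<otimes> inv k"
  by (simp add: m_ac)
end

locale tgrp = comm_group G for G (structure) +
  fixes T :: "'a topology"
  assumes top: "topspace T = carrier G"
    and mult_cont: "continuous_map (prod_topology T T) T (\<lambda>(x, y). x \<otimes> y)"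
    and inv_cont: "continuous_map T T (\<lambda>x. inv x)"
begin

lemma tr_cont: "a \<in> carrier G \<Longrightarrow> continuous_map T T (\<lambda>x. x \<otimes> a)"
proof -
  assume a: "a \<in> carrier G"
  have "continuous_map T (prod_topology T T) (\<lambda>x. (x, a))"
    by (intro continuous_map_pairedI) (auto simp: top a)
  from continuous_map_compose[OF this mult_cont] show ?thesis by (simp add: o_def)
qed

lemma open_tr:
  assumes "openin T U" "a \<in> carrier G" shows "openin T (U #> a)"
proof -
  have U: "U \<subseteq> carrier G" using openin_subset[OF assms(1)] top by auto
  have "U #> a = {x \<in> topspace T. x \<otimes> inv a \<in> U}"
  proof (auto simp: r_coset_def top)
    fix h assume "h \<in> U" then show "h \<otimes> a \<in> carrier G" using U assms by auto
  next
    fix h assume "h \<in> U" then show "h \<otimes> a \<otimes> inv a \<in> U" using U assms by (auto simp: m_assoc)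
  next
    fix x assume "x \<in> carrier G" "x \<otimes> inv a \<in> U"
    then show "\<exists>h\<in>U. x = h \<otimes> a" using assms by (intro bexI[of _ "x \<otimes> inv a"]) (auto simp: m_assoc)
  qed
  then show ?thesis using openin_continuous_map_preimage[OF tr_cont assms(1)] assms(2) by auto
qed

lemma closed_tr:
  assumes "closedin T U" "a \<in> carrier G" shows "closedin T (U #> a)"
proof -
  have U: "U \<subseteq> carrier G" using closedin_subset[OF assms(1)] top by auto
  have "U #> a = {x \<in> topspace T. x \<otimes> inv a \<in> U}"
  proof (auto simp: r_coset_def top)
    fix h assume "h \<in> U" then show "h \<otimes> a \<in> carrier G" using U assms by auto
  next
    fix h assume "h \<in> U" then show "h \<otimes> a \<otimes> inv a \<in> U" using U assms by (auto simp: m_assoc)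
  next
    fix x assume "x \<in> carrier G" "x \<otimes> inv a \<in> U"
    then show "\<exists>h\<in>U. x = h \<otimes> a" using assms by (intro bexI[of _ "x \<otimes> inv a"]) (auto simp: m_assoc)
  qed
  then show ?thesis using closedin_continuous_map_preimage[OF tr_cont assms(1)] assms(2) by auto
qed

lemma open_inv: "openin T U \<Longrightarrow> openin T {x \<in> carrier G. inv x \<in> U}"
  using openin_continuous_map_preimage[OF inv_cont, of U] top by simp

lemma mult_nbhd:
  assumes W: "openin T W" and a: "a \<in> carrier G" and b: "b \<in> carrier G" and ab: "a \<otimes> b \<in> W"
  shows "\<exists>U V. openin T U \<and> openin T V \<and> a \<in> U \<and> b \<in> V \<and> (\<forall>u\<in>U. \<forall>v\<in>V. u \<otimes> v \<in> W)"
proof -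
  define P where "P = {z \<in> topspace (prod_topology T T). (\<lambda>(x, y). x \<otimes> y) z \<in> W}"
  have op: "openin (prod_topology T T) P"
    unfolding P_def using openin_continuous_map_preimage[OF mult_cont W] .
  have mem: "(a, b) \<in> P"
    using a b ab by (simp add: top P_def)
  obtain U V where UV: "openin T U" "openin T V" "a \<in> U" "b \<in> V" "U \<times> V \<subseteq> P"
    using op mem unfolding openin_prod_topology_alt by meson
  have "\<forall>u\<in>U. \<forall>v\<in>V. u \<otimes> v \<in> W"
  proof (intro ballI)
    fix u v assume "u \<in> U" "v \<in> V"
    then have "(u, v) \<in> P" using UV(5) by blast
    then show "u \<otimes> v \<in> W" by (simp add: P_def)
  qed
  with UV show ?thesis by blast
qed

lemma open_subgroup_closed:
  assumes "subgroup H G" "openin T H" shows "closedin T H"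
proof -
  interpret H: subgroup H G by fact
  have eq: "carrier G - H = (\<Union>x\<in>carrier G - H. H #> x)"
  proof
    show "carrier G - H \<subseteq> (\<Union>x\<in>carrier G - H. H #> x)"
    proof
      fix x assume x: "x \<in> carrier G - H"
      have "x = \<one> \<otimes> x" using x by simp
      then have "x \<in> H #> x" unfolding r_coset_def by auto
      then show "x \<in> (\<Union>x\<in>carrier G - H. H #> x)" using x by auto
    qed
    show "(\<Union>x\<in>carrier G - H. H #> x) \<subseteq> carrier G - H"
    proof
      fix y assume "y \<in> (\<Union>x\<in>carrier G - H. H #> x)"
      then obtain x h where x: "x \<in> carrier G" "x \<notin> H" and h: "h \<in> H" and y: "y = h \<otimes> x"
        unfolding r_coset_def by auto
      have "h \<otimes> x \<notin> H"
      proof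
        assume "h \<otimes> x \<in> H"
        then have "inv h \<otimes> (h \<otimes> x) \<in> H" using h by auto
        then show False using x h by (simp add: m_assoc[symmetric])
      qed
      then show "y \<in> carrier G - H" using x h y by auto
    qed
  qed
  have "openin T (\<Union>x\<in>carrier G - H. H #> x)"
    using open_tr assms by auto
  then have "openin T (topspace T - H)" using eq by (simp add: top)
  then show ?thesis unfolding closedin_def using top H.subset by auto
qed


lemma rcos_mem_iff:
  assumes "subgroup H G" "x \<in> carrier G" "y \<in> carrier G"
  shows "y \<in> H #> x \<longleftrightarrow> y \<otimes> inv x \<in> H"
  using subgroup.rcos_module[OF assms(1) is_group assms(2,3)] .

lemma rcos_eq_iff:
  assumes H: "subgroup H G" and x: "x \<in> carrier G" and y: "y \<in> carrier G"
  shows "H #> x = H #> y \<longleftrightarrow> x \<otimes> inv y \<in> H"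
proof
  assume "H #> x = H #> y"
  then have "x \<in> H #> y" using rcos_self[OF x H] by simp
  then show "x \<otimes> inv y \<in> H" using rcos_mem_iff[OF H y x] by simp
next
  assume "x \<otimes> inv y \<in> H"
  then have "x \<in> H #> y" using rcos_mem_iff[OF H y x] by simp
  then show "H #> x = H #> y" using repr_independence[OF _ y H] by simp
qed

lemma rcos_same:
  assumes H: "subgroup H G" and x: "x \<in> carrier G" and y: "y \<in> H #> x"
  shows "H #> y = H #> x"
  using repr_independence[OF y x H] by simp

lemma rcos_carrier:
  assumes H: "subgroup H G" and x: "x \<in> carrier G" shows "H #> x \<subseteq> carrier G"
  using r_coset_subset_G[OF subgroup.subset[OF H] x] .

lemma compact_mult_closed:
  assumes C: "compactin T C" and S: "closedin T S"
  shows "closedin T (C <#> S)"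
proof -
  have Cc: "C \<subseteq> carrier G" using compactin_subset_topspace[OF C] top by simp
  have Sc: "S \<subseteq> carrier G" using closedin_subset[OF S] top by simp
  define XX where "XX = subtopology T C"
  have cX: "compact_space XX" unfolding XX_def using compact_space_subtopology[OF C] .
  define g where "g = (\<lambda>z::'a\<times>'a. inv (fst z) \<otimes> snd z)"
  have c1: "continuous_map (prod_topology XX T) T (\<lambda>z. inv (fst z))"
    using continuous_map_compose[OF continuous_map_fst continuous_map_from_subtopology[OF inv_cont]]
    unfolding XX_def by (simp add: o_def)
  have "continuous_map (prod_topology XX T) (prod_topology T T) (\<lambda>z. (inv (fst z), snd z))"
    using c1 continuous_map_snd by (intro continuous_map_pairedI)
  from continuous_map_compose[OF this mult_cont]
  have cg: "continuous_map (prod_topology XX T) T g" unfolding g_def by (simp add: o_def)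
  define Z where "Z = {z \<in> topspace (prod_topology XX T). g z \<in> S}"
  have "closedin (prod_topology XX T) Z"
    unfolding Z_def using closedin_continuous_map_preimage[OF cg S] .
  then have "closedin T (snd ` Z)" using closed_map_snd[OF cX] unfolding closed_map_def by blast
  moreover have "snd ` Z = C <#> S"
  proof
    show "snd ` Z \<subseteq> C <#> S"
    proof
      fix y assume "y \<in> snd ` Z"
      then obtain c where c: "c \<in> C" "y \<in> carrier G" "inv c \<otimes> y \<in> S"
        unfolding Z_def XX_def g_def using Cc by (auto simp: top)
      have cc: "c \<in> carrier G" using c Cc by auto
      have "y = c \<otimes> (inv c \<otimes> y)" using cc c by (simp add: m_assoc[symmetric])
      then show "y \<in> C <#> S" unfolding set_mult_def using c by blast
    qed
    show "C <#> S \<subseteq> snd ` Z"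
    proof
      fix y assume "y \<in> C <#> S"
      then obtain c s where cs: "c \<in> C" "s \<in> S" "y = c \<otimes> s" unfolding set_mult_def by blast
      have cc: "c \<in> carrier G" "s \<in> carrier G" using cs Cc Sc by auto
      have "inv c \<otimes> y = s" using cs cc by (simp add: m_assoc[symmetric])
      then have "(c, y) \<in> Z" unfolding Z_def XX_def g_def using cs cc Cc by (simp add: top)
      then show "y \<in> snd ` Z" by force
    qed
  qed
  ultimately show ?thesis by simp
qed

lemma rcosets_sub: "rcosets\<^bsub>G\<lparr>carrier := XX\<rparr>\<^esub> Nn = (\<lambda>x. Nn #> x) ` XX"
  by (auto simp: RCOSETS_def)

lemma union_rcosets:
  assumes XX: "subgroup XX G" and Nn: "subgroup Nn G" "Nn \<subseteq> XX"
  shows "\<Union>((\<lambda>x. Nn #> x) ` XX) = XX"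
proof
  show "\<Union>((\<lambda>x. Nn #> x) ` XX) \<subseteq> XX"
  proof (clarsimp simp: r_coset_def)
    fix x h assume "x \<in> XX" "h \<in> Nn"
    then show "h \<otimes> x \<in> XX" using Nn(2) subgroup.m_closed[OF XX] by auto
  qed
  show "XX \<subseteq> \<Union>((\<lambda>x. Nn #> x) ` XX)"
    using rcos_self[OF _ Nn(1)] subgroup.subset[OF XX] by blast
qed

lemma qt_istop:
  assumes XX: "subgroup XX G" and Nn: "subgroup Nn G" "Nn \<subseteq> XX"
  shows "istopology (\<lambda>U. U \<subseteq> (\<lambda>x. Nn #> x) ` XX \<and> openin (subtopology T XX) (\<Union>U))"
  unfolding istopology_def
proof (rule conjI; intro allI impI)
  fix S V assume S: "S \<subseteq> (\<lambda>x. Nn #> x) ` XX \<and> openin (subtopology T XX) (\<Union>S)"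
    and V: "V \<subseteq> (\<lambda>x. Nn #> x) ` XX \<and> openin (subtopology T XX) (\<Union>V)"
  have eq: "\<Union>(S \<inter> V) = \<Union>S \<inter> \<Union>V"
  proof
    show "\<Union>(S \<inter> V) \<subseteq> \<Union>S \<inter> \<Union>V" by blast
    show "\<Union>S \<inter> \<Union>V \<subseteq> \<Union>(S \<inter> V)"
    proof
      fix y assume "y \<in> \<Union>S \<inter> \<Union>V"
      then obtain c1 c2 where c: "c1 \<in> S" "c2 \<in> V" "y \<in> c1" "y \<in> c2" by blast
      obtain x1 x2 where x: "x1 \<in> XX" "x2 \<in> XX" "c1 = Nn #> x1" "c2 = Nn #> x2"
        using c S V by blast
      have xc: "x1 \<in> carrier G" "x2 \<in> carrier G" using x subgroup.subset[OF XX] by auto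
      have "c1 = c2" using rcos_same[OF Nn(1) xc(1)] rcos_same[OF Nn(1) xc(2)] c x by metis
      then show "y \<in> \<Union>(S \<inter> V)" using c by blast
    qed
  qed
  have op: "openin (subtopology T XX) (\<Union>S \<inter> \<Union>V)"
    using S V by (intro openin_Int) auto
  show "S \<inter> V \<subseteq> (\<lambda>x. Nn #> x) ` XX \<and> openin (subtopology T XX) (\<Union>(S \<inter> V))"
  proof
    show "S \<inter> V \<subseteq> (\<lambda>x. Nn #> x) ` XX" using S by blast
    show "openin (subtopology T XX) (\<Union>(S \<inter> V))" using op eq by simp
  qed
next
  fix KK assume "\<forall>U\<in>KK. U \<subseteq> (\<lambda>x. Nn #> x) ` XX \<and> openin (subtopology T XX) (\<Union>U)"
  moreover have "\<Union>(\<Union>KK) = \<Union>(Union ` KK)" by blast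
  moreover have "openin (subtopology T XX) (\<Union>(Union ` KK))"
    using calculation(1) by (intro openin_Union) auto
  ultimately show "\<Union>KK \<subseteq> (\<lambda>x. Nn #> x) ` XX \<and> openin (subtopology T XX) (\<Union>(\<Union>KK))"
    by auto
qed

lemma qt_open:
  assumes XX: "subgroup XX G" and Nn: "subgroup Nn G" "Nn \<subseteq> XX"
  shows "openin (quotient_group_topology (G\<lparr>carrier := XX\<rparr>) (subtopology T XX) Nn) U \<longleftrightarrow>
         U \<subseteq> (\<lambda>x. Nn #> x) ` XX \<and> openin (subtopology T XX) (\<Union>U)"
  unfolding quotient_group_topology_def rcosets_sub using qt_istop[OF assms] by simp

lemma qt_topspace:
  assumes XX: "subgroup XX G" and Nn: "subgroup Nn G" "Nn \<subseteq> XX"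
  shows "topspace (quotient_group_topology (G\<lparr>carrier := XX\<rparr>) (subtopology T XX) Nn) = (\<lambda>x. Nn #> x) ` XX"
proof
  show "topspace (quotient_group_topology (G\<lparr>carrier := XX\<rparr>) (subtopology T XX) Nn) \<subseteq> (\<lambda>x. Nn #> x) ` XX"
    using qt_open[OF assms] openin_topspace by blast
  have "openin (subtopology T XX) XX"
    using subgroup.subset[OF XX] top by (simp add: openin_subtopology_refl)
  then have "openin (quotient_group_topology (G\<lparr>carrier := XX\<rparr>) (subtopology T XX) Nn) ((\<lambda>x. Nn #> x) ` XX)"
    using qt_open[OF assms] union_rcosets[OF assms] by simp
  then show "(\<lambda>x. Nn #> x) ` XX \<subseteq> topspace (quotient_group_topology (G\<lparr>carrier := XX\<rparr>) (subtopology T XX) Nn)"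
    using openin_subset by blast
qed

end


locale fib0 = tgrp +
  fixes K Om M R :: "'a set"
  assumes Haus: "Hausdorff_space T" and lc: "locally_compact_space T"
  and Ksub: "subgroup K G" and Kc: "compactin T K"
  and Omsub: "subgroup Om G" and Omo: "openin T Om" and KOm: "K \<subseteq> Om"
  and Rsub: "subgroup R G" and ROm: "R \<subseteq> Om" and Rc: "closedin T R"
  and Msub: "subgroup M G" and Mc: "closedin T M" and KM: "K \<subseteq> M"
begin

abbreviation "NN \<equiv> K \<inter> R"
abbreviation "MO \<equiv> M <#> Om"
abbreviation "D \<equiv> (G\<lparr>carrier := MO\<rparr>) Mod Om"
abbreviation "TD \<equiv> quotient_group_topology (G\<lparr>carrier := MO\<rparr>) (subtopology T MO) Om"
abbreviation "E \<equiv> (G\<lparr>carrier := K\<rparr>) Mod NN"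
abbreviation "TE \<equiv> quotient_group_topology (G\<lparr>carrier := K\<rparr>) (subtopology T K) NN"
abbreviation "Hom \<equiv> cont_homs D TD E TE"
abbreviation "PT \<equiv> pointwise_hom_topology D TD E TE"
abbreviation "P \<equiv> product_topology (\<lambda>_. TE) (carrier D)"

lemma NNsub: "subgroup NN G"
  using subgroups_Inter_pair[OF Ksub Rsub] .

lemma MOsub: "subgroup MO G"
  using mult_subgroups[OF Msub Omsub] .

lemma Om_MO: "Om \<subseteq> MO"
proof
  fix w assume "w \<in> Om"
  then have "w = \<one> \<otimes> w" "\<one> \<in> M" using subgroup.mem_carrier[OF Omsub] subgroup.one_closed[OF Msub] by auto
  then show "w \<in> MO" using \<open>w \<in> Om\<close> unfolding set_mult_def by blast
qed

lemma Kcar: "K \<subseteq> carrier G" using subgroup.subset[OF Ksub] .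
lemma Omcar: "Om \<subseteq> carrier G" using subgroup.subset[OF Omsub] .
lemma Rcar: "R \<subseteq> carrier G" using subgroup.subset[OF Rsub] .
lemma Mcar: "M \<subseteq> carrier G" using subgroup.subset[OF Msub] .

lemma NNc: "closedin T NN"
  using compactin_imp_closedin[OF Haus Kc] Rc by blast

lemma Kclosed: "closedin T K"
  using compactin_imp_closedin[OF Haus Kc] .

lemma carrD: "carrier D = (\<lambda>x. Om #> x) ` MO"
  by (simp add: FactGroup_def rcosets_sub)

lemma carrE: "carrier E = (\<lambda>x. NN #> x) ` K"
  by (simp add: FactGroup_def rcosets_sub)

lemma multD: "x \<otimes>\<^bsub>D\<^esub> y = x <#> y"
  by simp

lemma multE: "x \<otimes>\<^bsub>E\<^esub> y = x <#> y"
  by simp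

lemma topD: "topspace TD = carrier D"
  using qt_topspace[OF MOsub Omsub Om_MO] carrD by simp

lemma topE: "topspace TE = carrier E"
  using qt_topspace[OF Ksub NNsub] carrE by auto

lemma openD: "openin TD U \<longleftrightarrow> U \<subseteq> carrier D"
proof
  assume "openin TD U" then show "U \<subseteq> carrier D" using openin_subset topD by blast
next
  assume U: "U \<subseteq> carrier D"
  have o: "openin T (\<Union>U)"
  proof (rule openin_Union)
    fix S assume "S \<in> U"
    then obtain x where "x \<in> MO" "S = Om #> x" using U carrD by auto
    then show "openin T S" using open_tr[OF Omo] subgroup.subset[OF MOsub] by auto
  qed
  have "\<Union>U \<subseteq> MO" using U carrD union_rcosets[OF MOsub Omsub Om_MO] by blast
  then have "openin (subtopology T MO) (\<Union>U)"
    using o by (metis inf.absorb_iff2 openin_subtopology_Int2)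
  then show "openin TD U" using qt_open[OF MOsub Omsub Om_MO] U carrD by simp
qed

lemma openE: "openin TE U \<longleftrightarrow> U \<subseteq> carrier E \<and> openin (subtopology T K) (\<Union>U)"
  using qt_open[OF Ksub NNsub] carrE by auto

lemma rcos_sumN:
  assumes "a \<in> carrier G" "b \<in> carrier G"
  shows "(NN #> a) <#> (NN #> b) = NN #> (a \<otimes> b)"
  using normal.rcos_sum[OF subgroup_imp_normal[OF NNsub] assms] .

lemma rcos_sumOm:
  assumes "a \<in> carrier G" "b \<in> carrier G"
  shows "(Om #> a) <#> (Om #> b) = Om #> (a \<otimes> b)"
  using normal.rcos_sum[OF subgroup_imp_normal[OF Omsub] assms] .

lemma cE_mem:
  assumes c: "c \<in> carrier E" and k: "k \<in> c"
  shows "c = NN #> k" "k \<in> K"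
proof -
  obtain a where a: "a \<in> K" "c = NN #> a" using c carrE by auto
  have ac: "a \<in> carrier G" using a Kcar by auto
  show "c = NN #> k" using rcos_same[OF NNsub ac] k a by simp
  have "NN #> a \<subseteq> K"
    using union_rcosets[OF Ksub NNsub] a by blast
  then show "k \<in> K" using a k by auto
qed

lemma cE_sub: "c \<in> carrier E \<Longrightarrow> c \<subseteq> K"
  using cE_mem by blast

lemma cE_ne:
  assumes c: "c \<in> carrier E" obtains k where "k \<in> K" "k \<in> c" "c = NN #> k"
proof -
  obtain a where a: "a \<in> K" "c = NN #> a" using c carrE by auto
  have "a \<in> c" using a rcos_self[OF _ NNsub] Kcar by auto
  then show ?thesis using that a by auto
qed

lemma qopen:
  assumes U: "openin T U"
  shows "openin TE {c \<in> carrier E. c \<inter> U \<noteq> {}}"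
proof -
  have Uc: "U \<subseteq> carrier G" using openin_subset[OF U] top by simp
  have eq: "\<Union>{c \<in> carrier E. c \<inter> U \<noteq> {}} = K \<inter> (\<Union>n\<in>NN. U #> n)"
  proof
    show "\<Union>{c \<in> carrier E. c \<inter> U \<noteq> {}} \<subseteq> K \<inter> (\<Union>n\<in>NN. U #> n)"
    proof
      fix k assume "k \<in> \<Union>{c \<in> carrier E. c \<inter> U \<noteq> {}}"
      then obtain c u where c: "c \<in> carrier E" "k \<in> c" "u \<in> c" "u \<in> U" by blast
      have kK: "k \<in> K" and ceq: "c = NN #> k" using cE_mem[OF c(1,2)] by auto
      have kc: "k \<in> carrier G" using kK Kcar by auto
      have uc: "u \<in> carrier G" using c Uc by auto
      have "u \<otimes> inv k \<in> NN" using rcos_mem_iff[OF NNsub kc uc] c ceq by simp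
      then have n: "inv (u \<otimes> inv k) \<in> NN" using subgroup.m_inv_closed[OF NNsub] by blast
      have "k = u \<otimes> inv (u \<otimes> inv k)" using kc uc by (simp add: inv_mult m_ac)
      then have "k \<in> U #> inv (u \<otimes> inv k)" unfolding r_coset_def using c by blast
      then show "k \<in> K \<inter> (\<Union>n\<in>NN. U #> n)" using kK n by blast
    qed
    show "K \<inter> (\<Union>n\<in>NN. U #> n) \<subseteq> \<Union>{c \<in> carrier E. c \<inter> U \<noteq> {}}"
    proof
      fix k assume "k \<in> K \<inter> (\<Union>n\<in>NN. U #> n)"
      then obtain n u where k: "k \<in> K" "n \<in> NN" "u \<in> U" "k = u \<otimes> n" unfolding r_coset_def by blast
      have nc: "n \<in> carrier G" "u \<in> carrier G" using k Kcar Uc by auto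
      have "k \<in> carrier G" using k Kcar by auto
      then have "u = inv n \<otimes> k" using k nc inv_solve_left[of u n k] m_comm[of u n] by auto
      moreover have "inv n \<in> NN" using k subgroup.m_inv_closed[OF NNsub] by blast
      ultimately have "u \<in> NN #> k" unfolding r_coset_def by blast
      moreover have "NN #> k \<in> carrier E" using k carrE by auto
      moreover have "k \<in> NN #> k" using rcos_self[OF _ NNsub] k Kcar by auto
      ultimately show "k \<in> \<Union>{c \<in> carrier E. c \<inter> U \<noteq> {}}" using k by blast
    qed
  qed
  have "openin T (\<Union>n\<in>NN. U #> n)"
    using open_tr[OF U] Kcar by (intro openin_Union) auto
  then have "openin (subtopology T K) (K \<inter> (\<Union>n\<in>NN. U #> n))"
    by (rule openin_subtopology_Int2)
  then show ?thesis unfolding openE using eq by auto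
qed

lemma qclosed:
  assumes SK: "S \<subseteq> K" and S: "closedin T S" and sat: "\<And>s n. s \<in> S \<Longrightarrow> n \<in> NN \<Longrightarrow> s \<otimes> n \<in> S"
  shows "openin TE {c \<in> carrier E. c \<inter> S = {}}"
proof -
  have eq: "\<Union>{c \<in> carrier E. c \<inter> S = {}} = K \<inter> (topspace T - S)"
  proof
    show "\<Union>{c \<in> carrier E. c \<inter> S = {}} \<subseteq> K \<inter> (topspace T - S)"
    proof
      fix k assume "k \<in> \<Union>{c \<in> carrier E. c \<inter> S = {}}"
      then obtain c where c: "c \<in> carrier E" "k \<in> c" "c \<inter> S = {}" by blast
      then show "k \<in> K \<inter> (topspace T - S)" using cE_mem[OF c(1,2)] Kcar top by auto
    qed
    show "K \<inter> (topspace T - S) \<subseteq> \<Union>{c \<in> carrier E. c \<inter> S = {}}"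
    proof
      fix k assume k: "k \<in> K \<inter> (topspace T - S)"
      have kc: "k \<in> carrier G" using k Kcar by auto
      have "(NN #> k) \<inter> S = {}"
      proof (rule ccontr)
        assume "(NN #> k) \<inter> S \<noteq> {}"
        then obtain n where n: "n \<in> NN" "n \<otimes> k \<in> S" unfolding r_coset_def by blast
        have nc: "n \<in> carrier G" using n Kcar by auto
        have "inv n \<in> NN" using n subgroup.m_inv_closed[OF NNsub] by blast
        then have "n \<otimes> k \<otimes> inv n \<in> S" using sat n by blast
        moreover have "n \<otimes> k \<otimes> inv n = k" using nc kc by (simp add: m_ac)
        ultimately show False using k by auto
      qed
      moreover have "NN #> k \<in> carrier E" using k carrE by auto
      moreover have "k \<in> NN #> k" using rcos_self[OF kc NNsub] .
      ultimately show "k \<in> \<Union>{c \<in> carrier E. c \<inter> S = {}}" by blast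
    qed
  qed
  have "openin (subtopology T K) (K \<inter> (topspace T - S))"
    using S by (intro openin_subtopology_Int2) (simp add: openin_diff)
  then show ?thesis unfolding openE using eq by auto
qed

lemma q_cont: "continuous_map (subtopology T K) TE (\<lambda>k. NN #> k)"
  unfolding continuous_map_def
proof (intro conjI allI impI)
  show "(\<lambda>k. NN #> k) \<in> topspace (subtopology T K) \<rightarrow> topspace TE"
    using topE carrE top Kcar by auto
next
  fix U assume U: "openin TE U"
  have "{x \<in> topspace (subtopology T K). NN #> x \<in> U} = \<Union>U"
  proof
    show "{x \<in> topspace (subtopology T K). NN #> x \<in> U} \<subseteq> \<Union>U"
      using rcos_self[OF _ NNsub] top by auto
    show "\<Union>U \<subseteq> {x \<in> topspace (subtopology T K). NN #> x \<in> U}"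
    proof
      fix k assume "k \<in> \<Union>U"
      then obtain c where c: "c \<in> U" "k \<in> c" by blast
      have cE: "c \<in> carrier E" using c U openE by auto
      show "k \<in> {x \<in> topspace (subtopology T K). NN #> x \<in> U}"
        using cE_mem[OF cE c(2)] c top Kcar by auto
    qed
  qed
  then show "openin (subtopology T K) {x \<in> topspace (subtopology T K). NN #> x \<in> U}"
    using U openE by simp
qed

lemma compE: "compact_space TE"
proof -
  have "compactin (subtopology T K) K"
    using Kc by (simp add: compactin_subtopology)
  from image_compactin[OF this q_cont]
  have "compactin TE ((\<lambda>k. NN #> k) ` K)" .
  then show ?thesis unfolding compact_space_def using topE carrE by simp
qed


lemma topP: "topspace P = (\<Pi>\<^sub>E d\<in>carrier D. carrier E)"
  using topE by simp

lemma D_mult_closed: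
  assumes "x \<in> carrier D" "y \<in> carrier D" shows "x <#> y \<in> carrier D"
proof -
  obtain a b where ab: "a \<in> MO" "b \<in> MO" "x = Om #> a" "y = Om #> b" using assms carrD by auto
  have abc: "a \<in> carrier G" "b \<in> carrier G" using ab subgroup.subset[OF MOsub] by auto
  have "x <#> y = Om #> (a \<otimes> b)" using ab abc rcos_sumOm by simp
  moreover have "a \<otimes> b \<in> MO" using ab subgroup.m_closed[OF MOsub] by auto
  ultimately show ?thesis using carrD by auto
qed

lemma HomEq: "Hom = {f \<in> topspace P. \<forall>x\<in>carrier D. \<forall>y\<in>carrier D. f (x <#> y) = f x <#> f y}"
proof
  show "Hom \<subseteq> {f \<in> topspace P. \<forall>x\<in>carrier D. \<forall>y\<in>carrier D. f (x <#> y) = f x <#> f y}"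
  proof
    fix f assume "f \<in> Hom"
    then have f: "f \<in> extensional (carrier D)" "f \<in> hom D E" unfolding cont_homs_def by auto
    then have "f \<in> carrier D \<rightarrow> carrier E" "\<forall>x\<in>carrier D. \<forall>y\<in>carrier D. f (x <#> y) = f x <#> f y"
      unfolding hom_def by auto
    then show "f \<in> {f \<in> topspace P. \<forall>x\<in>carrier D. \<forall>y\<in>carrier D. f (x <#> y) = f x <#> f y}"
      using f(1) topP by (auto simp: PiE_def)
  qed
  show "{f \<in> topspace P. \<forall>x\<in>carrier D. \<forall>y\<in>carrier D. f (x <#> y) = f x <#> f y} \<subseteq> Hom"
  proof
    fix f assume f: "f \<in> {f \<in> topspace P. \<forall>x\<in>carrier D. \<forall>y\<in>carrier D. f (x <#> y) = f x <#> f y}"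
    then have fP: "f \<in> (\<Pi>\<^sub>E d\<in>carrier D. carrier E)" using topP by auto
    then have fe: "f \<in> extensional (carrier D)" and fpi: "f \<in> carrier D \<rightarrow> carrier E" by (auto simp: PiE_def)
    have "f \<in> hom D E" unfolding hom_def using f fpi by auto
    moreover have "continuous_map TD TE f"
      unfolding continuous_map_def using fpi topD topE openD by auto
    ultimately show "f \<in> Hom" unfolding cont_homs_def using fe by auto
  qed
qed

lemma topPT: "topspace PT = Hom"
  unfolding pointwise_hom_topology_def using HomEq by auto

lemma evopen:
  assumes "d \<in> carrier D" "openin TE Op"
  shows "openin P {f \<in> topspace P. f d \<in> Op}"
  using openin_continuous_map_preimage[OF continuous_map_product_projection[OF assms(1)] assms(2)] .

lemma sep3:
  assumes kc: "k1 \<in> carrier G" "k2 \<in> carrier G" "k3 \<in> carrier G"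
    and notin: "k1 \<otimes> k2 \<otimes> inv k3 \<notin> NN"
  shows "\<exists>U1 U2 U3. openin T U1 \<and> openin T U2 \<and> openin T U3 \<and> k1 \<in> U1 \<and> k2 \<in> U2 \<and> k3 \<in> U3 \<and>
     (\<forall>u1\<in>U1. \<forall>u2\<in>U2. \<forall>u3\<in>U3. u1 \<otimes> u2 \<otimes> inv u3 \<notin> NN)"
proof -
  define W where "W = topspace T - NN"
  have W: "openin T W" unfolding W_def using NNc by auto
  have inW: "k1 \<otimes> k2 \<otimes> inv k3 \<in> W" using notin kc top unfolding W_def by simp
  have k12: "k1 \<otimes> k2 \<in> carrier G" "inv k3 \<in> carrier G" using kc by auto
  obtain U12 U3' where U12: "openin T U12" "openin T U3'" "k1 \<otimes> k2 \<in> U12" "inv k3 \<in> U3'"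
    "\<forall>u\<in>U12. \<forall>v\<in>U3'. u \<otimes> v \<in> W"
    using mult_nbhd[OF W k12 inW] by blast
  obtain U1 U2 where U1: "openin T U1" "openin T U2" "k1 \<in> U1" "k2 \<in> U2" "\<forall>u\<in>U1. \<forall>v\<in>U2. u \<otimes> v \<in> U12"
    using mult_nbhd[OF U12(1) kc(1) kc(2) U12(3)] by blast
  define U3 where "U3 = {z \<in> carrier G. inv z \<in> U3'}"
  have U3: "openin T U3" "k3 \<in> U3" using open_inv[OF U12(2)] U12(4) kc(3) unfolding U3_def by auto
  have "\<forall>u1\<in>U1. \<forall>u2\<in>U2. \<forall>u3\<in>U3. u1 \<otimes> u2 \<otimes> inv u3 \<notin> NN"
  proof (intro ballI)
    fix u1 u2 u3 assume u: "u1 \<in> U1" "u2 \<in> U2" "u3 \<in> U3"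
    have "u1 \<otimes> u2 \<in> U12" using U1(5) u by blast
    moreover have "inv u3 \<in> U3'" using u(3) unfolding U3_def by simp
    ultimately have "u1 \<otimes> u2 \<otimes> inv u3 \<in> W" using U12(5) by blast
    then show "u1 \<otimes> u2 \<otimes> inv u3 \<notin> NN" unfolding W_def by simp
  qed
  then show ?thesis using U1 U3 by blast
qed

lemma Hom_closed_aux:
  assumes fP: "f \<in> topspace P" and xy: "x \<in> carrier D" "y \<in> carrier D" and ne: "f (x <#> y) \<noteq> f x <#> f y"
  shows "\<exists>Op. openin P Op \<and> f \<in> Op \<and> Op \<inter> Hom = {}"
proof -
  have fP': "f \<in> (\<Pi>\<^sub>E d\<in>carrier D. carrier E)" using fP topP by simp
  have xyD: "x <#> y \<in> carrier D" using D_mult_closed xy by auto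
  have fx: "f x \<in> carrier E" "f y \<in> carrier E" "f (x <#> y) \<in> carrier E" using fP' xy xyD by auto
  obtain k1 where k1: "k1 \<in> K" "k1 \<in> f x" "f x = NN #> k1" using cE_ne[OF fx(1)] by blast
  obtain k2 where k2: "k2 \<in> K" "k2 \<in> f y" "f y = NN #> k2" using cE_ne[OF fx(2)] by blast
  obtain k3 where k3: "k3 \<in> K" "k3 \<in> f (x <#> y)" "f (x <#> y) = NN #> k3" using cE_ne[OF fx(3)] by blast
  have kc: "k1 \<in> carrier G" "k2 \<in> carrier G" "k3 \<in> carrier G" using k1 k2 k3 Kcar by auto
  have "f x <#> f y = NN #> (k1 \<otimes> k2)" using k1(3) k2(3) rcos_sumN kc by simp
  then have "NN #> k3 \<noteq> NN #> (k1 \<otimes> k2)" using ne k3(3) by simp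
  then have notin: "k1 \<otimes> k2 \<otimes> inv k3 \<notin> NN" using rcos_eq_iff[OF NNsub, of "k1 \<otimes> k2" k3] kc by auto
  obtain U1 U2 U3 where U: "openin T U1" "openin T U2" "openin T U3" "k1 \<in> U1" "k2 \<in> U2" "k3 \<in> U3"
     "\<forall>u1\<in>U1. \<forall>u2\<in>U2. \<forall>u3\<in>U3. u1 \<otimes> u2 \<otimes> inv u3 \<notin> NN"
    using sep3[OF kc notin] by blast
  define Op where "Op = {g \<in> topspace P. g x \<in> {c \<in> carrier E. c \<inter> U1 \<noteq> {}}} \<inter>
      {g \<in> topspace P. g y \<in> {c \<in> carrier E. c \<inter> U2 \<noteq> {}}} \<inter>
      {g \<in> topspace P. g (x <#> y) \<in> {c \<in> carrier E. c \<inter> U3 \<noteq> {}}}"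
  have o1: "openin P {g \<in> topspace P. g x \<in> {c \<in> carrier E. c \<inter> U1 \<noteq> {}}}"
    using evopen[OF xy(1) qopen[OF U(1)]] .
  have o2: "openin P {g \<in> topspace P. g y \<in> {c \<in> carrier E. c \<inter> U2 \<noteq> {}}}"
    using evopen[OF xy(2) qopen[OF U(2)]] .
  have o3: "openin P {g \<in> topspace P. g (x <#> y) \<in> {c \<in> carrier E. c \<inter> U3 \<noteq> {}}}"
    using evopen[OF xyD qopen[OF U(3)]] .
  have "openin P Op" unfolding Op_def using o1 o2 o3 by (intro openin_Int)
  moreover have "f x \<inter> U1 \<noteq> {}" "f y \<inter> U2 \<noteq> {}" "f (x <#> y) \<inter> U3 \<noteq> {}"
    using k1(2) k2(2) k3(2) U(4,5,6) by blast+
  then have "f \<in> Op" unfolding Op_def using fP fx by simp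
  moreover have "Op \<inter> Hom = {}"
  proof (rule ccontr)
    assume "Op \<inter> Hom \<noteq> {}"
    then obtain g where g: "g \<in> Op" "g \<in> Hom" by blast
    from g(1) have g1: "g x \<inter> U1 \<noteq> {}" "g y \<inter> U2 \<noteq> {}" "g (x <#> y) \<inter> U3 \<noteq> {}"
      and gE: "g x \<in> carrier E" "g y \<in> carrier E" "g (x <#> y) \<in> carrier E"
      unfolding Op_def by simp_all
    obtain u1 u2 u3 where u: "u1 \<in> g x" "u1 \<in> U1" "u2 \<in> g y" "u2 \<in> U2" "u3 \<in> g (x <#> y)" "u3 \<in> U3"
      using g1 by blast
    have uK: "u1 \<in> K" "u2 \<in> K" "u3 \<in> K" 
      using cE_mem(2)[OF gE(1) u(1)] cE_mem(2)[OF gE(2) u(3)] cE_mem(2)[OF gE(3) u(5)] by simp_all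
    have ueq: "g x = NN #> u1" "g y = NN #> u2" "g (x <#> y) = NN #> u3"
      using cE_mem(1)[OF gE(1) u(1)] cE_mem(1)[OF gE(2) u(3)] cE_mem(1)[OF gE(3) u(5)] by simp_all
    have uc: "u1 \<in> carrier G" "u2 \<in> carrier G" "u3 \<in> carrier G" using uK Kcar by auto
    have "g (x <#> y) = g x <#> g y" using g(2) HomEq xy by blast
    then have "NN #> u3 = NN #> (u1 \<otimes> u2)" using ueq rcos_sumN[OF uc(1) uc(2)] by simp
    then have "u1 \<otimes> u2 \<otimes> inv u3 \<in> NN" using rcos_eq_iff[OF NNsub, of "u1 \<otimes> u2" u3] uc by auto
    then show False using U(7) u by blast
  qed
  ultimately show ?thesis by blast
qed

lemma Hom_closed: "closedin P Hom"
  unfolding closedin_def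
proof
  show "Hom \<subseteq> topspace P" by (subst HomEq) blast
  show "openin P (topspace P - Hom)"
  proof (rule openin_subopen[THEN iffD2], intro ballI)
    fix f assume f: "f \<in> topspace P - Hom"
    have fn: "f \<notin> {f \<in> topspace P. \<forall>x\<in>carrier D. \<forall>y\<in>carrier D. f (x <#> y) = f x <#> f y}"
      using f by (simp only: HomEq Diff_iff not_False_eq_True)
    have "\<not> (\<forall>x\<in>carrier D. \<forall>y\<in>carrier D. f (x <#> y) = f x <#> f y)"
      using f fn by simp
    then obtain x y where xy: "x \<in> carrier D" "y \<in> carrier D" "f (x <#> y) \<noteq> f x <#> f y"
      by blast
    obtain Op where "openin P Op" "f \<in> Op" "Op \<inter> Hom = {}"
      using Hom_closed_aux[OF _ xy] f by blast
    moreover then have "Op \<subseteq> topspace P - Hom" using openin_subset by blast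
    ultimately show "\<exists>T'. openin P T' \<and> f \<in> T' \<and> T' \<subseteq> topspace P - Hom" by blast
  qed
qed

lemma compPT: "compact_space PT"
proof -
  have "compact_space P" using compE by (simp add: compact_space_product_topology)
  then have "compactin P Hom" using Hom_closed closedin_compact_space by blast
  then show ?thesis unfolding pointwise_hom_topology_def by (rule compact_space_subtopology)
qed


abbreviation "fiberset \<equiv> {H \<in> closed_subgroups G T. H \<inter> Om = R \<and> (\<lambda>h. K #> h) ` H = (\<lambda>m. K #> m) ` M}"

lemma K_rcos_M: "m \<in> M \<Longrightarrow> K #> m \<subseteq> M"
  using subgroup.m_closed[OF Msub] KM Mcar unfolding r_coset_def by auto

lemma imgcond:
  assumes H: "subgroup H G"
  shows "((\<lambda>h. K #> h) ` H = (\<lambda>m. K #> m) ` M) \<longleftrightarrow> (H \<subseteq> M \<and> (\<forall>m\<in>M. \<exists>h\<in>H. \<exists>k\<in>K. m = h \<otimes> k))"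
proof
  assume eq: "(\<lambda>h. K #> h) ` H = (\<lambda>m. K #> m) ` M"
  have "H \<subseteq> M"
  proof
    fix h assume h: "h \<in> H"
    have hc: "h \<in> carrier G" using h subgroup.subset[OF H] by auto
    have "K #> h \<in> (\<lambda>m. K #> m) ` M" using eq h by blast
    then obtain m where m: "m \<in> M" "K #> h = K #> m" by blast
    have "h \<in> K #> h" using rcos_self[OF hc Ksub] .
    then show "h \<in> M" using m K_rcos_M by auto
  qed
  moreover have "\<forall>m\<in>M. \<exists>h\<in>H. \<exists>k\<in>K. m = h \<otimes> k"
  proof
    fix m assume m: "m \<in> M"
    have mc: "m \<in> carrier G" using m Mcar by auto
    have "K #> m \<in> (\<lambda>h. K #> h) ` H" using eq m by blast
    then obtain h where h: "h \<in> H" "K #> m = K #> h" by blast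
    have "m \<in> K #> h" using rcos_self[OF mc Ksub] h by simp
    then obtain k where "k \<in> K" "m = k \<otimes> h" unfolding r_coset_def by blast
    moreover have "h \<in> carrier G" "k \<in> carrier G" using h calculation subgroup.subset[OF H] Kcar by auto
    ultimately show "\<exists>h\<in>H. \<exists>k\<in>K. m = h \<otimes> k" using h m_comm by blast
  qed
  ultimately show "H \<subseteq> M \<and> (\<forall>m\<in>M. \<exists>h\<in>H. \<exists>k\<in>K. m = h \<otimes> k)" by blast
next
  assume A: "H \<subseteq> M \<and> (\<forall>m\<in>M. \<exists>h\<in>H. \<exists>k\<in>K. m = h \<otimes> k)"
  show "(\<lambda>h. K #> h) ` H = (\<lambda>m. K #> m) ` M"
  proof
    show "(\<lambda>h. K #> h) ` H \<subseteq> (\<lambda>m. K #> m) ` M" using A by blast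
    show "(\<lambda>m. K #> m) ` M \<subseteq> (\<lambda>h. K #> h) ` H"
    proof
      fix c assume "c \<in> (\<lambda>m. K #> m) ` M"
      then obtain m where m: "m \<in> M" "c = K #> m" by blast
      then obtain h k where hk: "h \<in> H" "k \<in> K" "m = h \<otimes> k" using A by blast
      have c: "h \<in> carrier G" "k \<in> carrier G" using hk subgroup.subset[OF H] Kcar by auto
      have "m \<otimes> inv h = k" using hk c solve1 by simp
      then have "K #> m = K #> h" using rcos_eq_iff[OF Ksub, of m h] c hk by simp
      then show "c \<in> (\<lambda>h. K #> h) ` H" using m hk by blast
    qed
  qed
qed


abbreviation "CS \<equiv> closed_subgroups G T"
abbreviation "SB \<equiv> {{F \<in> CS. F \<inter> C = {}} | C. compactin T C} \<union> {{F \<in> CS. F \<inter> U \<noteq> {}} | U. openin T U}"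

lemma ch_def: "chabauty G T = topology_generated_by SB"
  by (simp add: chabauty_def)

lemma SB_sub: "S \<in> SB \<Longrightarrow> S \<subseteq> CS"
  by (erule UnE; clarify; blast)

lemma SB_A: "compactin T C \<Longrightarrow> {F \<in> CS. F \<inter> C = {}} \<in> SB"
  by (rule UnI1, rule CollectI, rule exI[of _ C]) simp

lemma SB_B: "openin T U \<Longrightarrow> {F \<in> CS. F \<inter> U \<noteq> {}} \<in> SB"
  by (rule UnI2, rule CollectI, rule exI[of _ U]) simp

lemma UnionSB: "\<Union>SB = CS"
proof
  show "\<Union>SB \<subseteq> CS"
  proof (rule Union_least)
    fix S assume "S \<in> SB" then show "S \<subseteq> CS" by (rule SB_sub)
  qed
  have X: "{F \<in> CS. F \<inter> {} = {}} \<in> SB" by (rule SB_A) simp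
  have eq: "{F \<in> CS. F \<inter> {} = {}} = CS" by simp
  have "CS \<in> SB" using X by (subst (asm) eq)
  then show "CS \<subseteq> \<Union>SB" by (rule Union_upper)
qed

lemma topch: "topspace (chabauty G T) = CS"
  unfolding ch_def topology_generated_by_topspace by (rule UnionSB)

lemma sepch:
  assumes F1: "F1 \<in> CS" and F2: "F2 \<in> CS" and x: "x \<in> F1" "x \<notin> F2"
  shows "\<exists>U V. openin (chabauty G T) U \<and> openin (chabauty G T) V \<and> F1 \<in> U \<and> F2 \<in> V \<and> disjnt U V"
proof -
  have F2c: "closedin T F2" using F2 unfolding closed_subgroups_def by blast
  have F1s: "F1 \<subseteq> carrier G" using F1 subgroup.subset unfolding closed_subgroups_def by blast
  define W where "W = topspace T - F2"
  have W1: "openin T W" unfolding W_def by (intro openin_diff openin_topspace F2c)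
  have W2: "x \<in> W" using x F1s top unfolding W_def by auto
  note W = W1 W2
  have nb: "neighbourhood_base_of (compactin T) T"
    using locally_compact_space_neighbourhood_base[OF disjI1[OF Haus], THEN iffD1, OF lc] .
  have "\<exists>U V. openin T U \<and> compactin T V \<and> x \<in> U \<and> U \<subseteq> V \<and> V \<subseteq> W"
    using nb[unfolded neighbourhood_base_of, rule_format, OF conjI[OF W(1) W(2)]] .
  then obtain U0 V0 where UV: "openin T U0" "compactin T V0" "x \<in> U0" "U0 \<subseteq> V0" "V0 \<subseteq> W"
    by blast
  define A where "A = {F \<in> CS. F \<inter> U0 \<noteq> {}}"
  define B where "B = {F \<in> CS. F \<inter> V0 = {}}"
  have "A \<in> SB" unfolding A_def using UV(1) by (rule SB_B)
  then have oA: "openin (chabauty G T) A" unfolding ch_def by (rule topology_generated_by_Basis)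
  have "B \<in> SB" unfolding B_def using UV(2) by (rule SB_A)
  then have oB: "openin (chabauty G T) B" unfolding ch_def by (rule topology_generated_by_Basis)
  have "F1 \<inter> U0 \<noteq> {}" using x UV by blast
  then have "F1 \<in> A" unfolding A_def using F1 by simp
  moreover have "F2 \<inter> V0 = {}" using UV(5) W_def by blast
  then have "F2 \<in> B" unfolding B_def using F2 by simp
  moreover have "disjnt A B" unfolding A_def B_def disjnt_def using UV(4) by blast
  ultimately show ?thesis using oA oB by (intro exI[of _ A] exI[of _ B]) simp
qed

lemma Haus_ch: "Hausdorff_space (chabauty G T)"
  unfolding Hausdorff_space_def topch
proof (intro allI impI)
  fix F1 F2 assume A: "F1 \<in> CS \<and> F2 \<in> CS \<and> F1 \<noteq> F2"
  then have F: "F1 \<in> CS" "F2 \<in> CS" and ne: "F1 \<noteq> F2" by simp_all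
  have "\<not> F1 \<subseteq> F2 \<or> \<not> F2 \<subseteq> F1" using ne subset_antisym by blast
  then show "\<exists>U V. openin (chabauty G T) U \<and> openin (chabauty G T) V \<and> F1 \<in> U \<and> F2 \<in> V \<and> disjnt U V"
  proof
    assume "\<not> F1 \<subseteq> F2"
    then obtain x where "x \<in> F1" "x \<notin> F2" by (meson subsetI)
    then show ?thesis using sepch[OF F(1) F(2)] by blast
  next
    assume "\<not> F2 \<subseteq> F1"
    then obtain x where "x \<in> F2" "x \<notin> F1" by (meson subsetI)
    then obtain U V where UV: "openin (chabauty G T) U" "openin (chabauty G T) V" "F2 \<in> U" "F1 \<in> V" "disjnt U V"
      using sepch[OF F(2) F(1)] by blast
    then have "disjnt V U" using disjnt_sym by blast
    then show ?thesis using UV by blast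
  qed
qed

end

locale fib = fib0 +
  fixes H0 :: "'a set"
  assumes H0sub: "subgroup H0 G" and H0c: "closedin T H0" and H0Om: "H0 \<inter> Om = R"
    and H0M: "H0 \<subseteq> M" and H0cov: "\<And>m. m \<in> M \<Longrightarrow> \<exists>h\<in>H0. \<exists>k\<in>K. m = h \<otimes> k"
begin

definition Psi :: "('a set \<Rightarrow> 'a set) \<Rightarrow> 'a set" where
  "Psi \<phi> = {x. \<exists>h\<in>H0. \<exists>k. k \<in> \<phi> (Om #> h) \<and> x = h \<otimes> k}"

definition Phi :: "'a set \<Rightarrow> 'a set \<Rightarrow> 'a set" where
  "Phi H = (\<lambda>d\<in>carrier D. {k \<in> K. \<exists>h\<in>H0. h \<in> d \<and> h \<otimes> k \<in> H})"

lemma H0car: "H0 \<subseteq> carrier G" using subgroup.subset[OF H0sub] .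

lemma H0_MO: "H0 \<subseteq> MO"
proof
  fix h assume h: "h \<in> H0"
  then have "h = h \<otimes> \<one>" using H0car by auto
  moreover have "\<one> \<in> Om" using subgroup.one_closed[OF Omsub] .
  ultimately show "h \<in> MO" using h H0M unfolding set_mult_def by blast
qed

lemma carrD_H0: "carrier D = (\<lambda>h. Om #> h) ` H0"
proof
  show "(\<lambda>h. Om #> h) ` H0 \<subseteq> carrier D" using carrD H0_MO by auto
  show "carrier D \<subseteq> (\<lambda>h. Om #> h) ` H0"
  proof
    fix d assume "d \<in> carrier D"
    then obtain y where y: "y \<in> MO" "d = Om #> y" using carrD by auto
    then obtain m w where mw: "m \<in> M" "w \<in> Om" "y = m \<otimes> w" unfolding set_mult_def by blast
    then obtain h k where hk: "h \<in> H0" "k \<in> K" "m = h \<otimes> k" using H0cov by blast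
    have c: "h \<in> carrier G" "k \<in> carrier G" "w \<in> carrier G" using hk mw H0car Kcar Omcar by auto
    have "y = h \<otimes> (k \<otimes> w)" using mw hk c by (simp add: m_assoc)
    then have "y \<otimes> inv h = k \<otimes> w" using c solve1[of h "k \<otimes> w"] by simp
    moreover have "k \<otimes> w \<in> Om" using hk mw KOm subgroup.m_closed[OF Omsub] by auto
    ultimately have "Om #> y = Om #> h" using rcos_eq_iff[OF Omsub, of y h] c mw hk by simp
    then show "d \<in> (\<lambda>h. Om #> h) ` H0" using y hk by blast
  qed
qed

lemma OmH0_eq:
  assumes "h \<in> H0" "h' \<in> H0"
  shows "Om #> h' = Om #> h \<longleftrightarrow> h' \<otimes> inv h \<in> R"
proof -
  have c: "h \<in> carrier G" "h' \<in> carrier G" using assms H0car by auto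
  have "h' \<otimes> inv h \<in> H0" using assms subgroup.m_closed[OF H0sub] subgroup.m_inv_closed[OF H0sub] by auto
  then show ?thesis using rcos_eq_iff[OF Omsub c(2) c(1)] H0Om by auto
qed

lemma Om_one: "Om #> \<one> = Om" using Omcar by simp

lemma one_H0: "\<one> \<in> H0" using subgroup.one_closed[OF H0sub] .

context
  fixes \<phi> assumes phi: "\<phi> \<in> Hom"
begin

lemma phiE: "d \<in> carrier D \<Longrightarrow> \<phi> d \<in> carrier E"
  using phi HomEq topP by (auto simp: PiE_def)

lemma phiE_H0: "h \<in> H0 \<Longrightarrow> \<phi> (Om #> h) \<in> carrier E"
  using phiE carrD_H0 by auto

lemma phi_mult: "a \<in> H0 \<Longrightarrow> b \<in> H0 \<Longrightarrow> \<phi> (Om #> (a \<otimes> b)) = \<phi> (Om #> a) <#> \<phi> (Om #> b)"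
proof -
  assume ab: "a \<in> H0" "b \<in> H0"
  have "Om #> a \<in> carrier D" "Om #> b \<in> carrier D" using ab carrD_H0 by auto
  then have "\<phi> ((Om #> a) <#> (Om #> b)) = \<phi> (Om #> a) <#> \<phi> (Om #> b)"
    using phi HomEq by blast
  moreover have "(Om #> a) <#> (Om #> b) = Om #> (a \<otimes> b)" using rcos_sumOm ab H0car by auto
  ultimately show ?thesis by simp
qed

lemma phi_one: "\<phi> Om = NN"
proof -
  have "\<phi> (Om #> (\<one> \<otimes> \<one>)) = \<phi> (Om #> \<one>) <#> \<phi> (Om #> \<one>)" using phi_mult one_H0 by blast
  then have eq: "\<phi> Om = \<phi> Om <#> \<phi> Om" using Om_one by simp
  obtain k where k: "k \<in> K" "k \<in> \<phi> Om" "\<phi> Om = NN #> k"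
    using cE_ne[OF phiE_H0[OF one_H0]] Om_one by auto
  have kc: "k \<in> carrier G" using k Kcar by auto
  have "NN #> k = NN #> (k \<otimes> k)" using eq k rcos_sumN kc by simp
  then have "k \<otimes> inv (k \<otimes> k) \<in> NN" using rcos_eq_iff[OF NNsub, of k "k \<otimes> k"] kc by simp
  moreover have "k \<otimes> inv (k \<otimes> k) = inv k" using kc by (simp add: inv_mult m_assoc[symmetric])
  ultimately have "inv k \<in> NN" by simp
  then have "k \<in> NN" using subgroup.m_inv_closed[OF NNsub] kc by fastforce
  then show ?thesis using k coset_join2[OF kc NNsub] by simp
qed

lemma phi_sub: "h \<in> H0 \<Longrightarrow> \<phi> (Om #> h) \<subseteq> K"
  using cE_sub phiE_H0 by blast

lemma mem_Psi:
  assumes h: "h \<in> H0" and k: "k \<in> K"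
  shows "h \<otimes> k \<in> Psi \<phi> \<longleftrightarrow> k \<in> \<phi> (Om #> h)"
proof
  assume "k \<in> \<phi> (Om #> h)" then show "h \<otimes> k \<in> Psi \<phi>" unfolding Psi_def using h by blast
next
  assume "h \<otimes> k \<in> Psi \<phi>"
  then obtain h' k' where hk: "h' \<in> H0" "k' \<in> \<phi> (Om #> h')" "h \<otimes> k = h' \<otimes> k'" unfolding Psi_def by blast
  have k'K: "k' \<in> K" using phi_sub hk by blast
  have c: "h \<in> carrier G" "k \<in> carrier G" "h' \<in> carrier G" "k' \<in> carrier G" using h k hk k'K H0car Kcar by auto
  have eq: "h' \<otimes> inv h = k \<otimes> inv k'"
    using swapeq[OF c(1) c(2) c(3) c(4) hk(3)] .
  have "k \<otimes> inv k' \<in> K" using k k'K subgroup.m_closed[OF Ksub] subgroup.m_inv_closed[OF Ksub] by auto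
  moreover have "h' \<otimes> inv h \<in> H0" using h hk subgroup.m_closed[OF H0sub] subgroup.m_inv_closed[OF H0sub] by auto
  ultimately have r: "h' \<otimes> inv h \<in> NN" using eq H0Om KOm by auto
  then have "Om #> h' = Om #> h" using OmH0_eq[OF h hk(1)] by auto
  then have k'in: "k' \<in> \<phi> (Om #> h)" using hk by simp
  have ceq: "\<phi> (Om #> h) = NN #> k'" using cE_mem[OF phiE_H0[OF h] k'in] by simp
  have "k \<otimes> inv k' \<in> NN" using r eq by simp
  then have "k \<in> NN #> k'" using rcos_mem_iff[OF NNsub c(4) c(2)] by simp
  then show "k \<in> \<phi> (Om #> h)" using ceq by simp
qed

lemma Psi_elem:
  assumes "x \<in> Psi \<phi>" obtains h k where "h \<in> H0" "k \<in> K" "k \<in> \<phi> (Om #> h)" "x = h \<otimes> k"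
  using assms phi_sub unfolding Psi_def by blast

lemma Psi_car: "Psi \<phi> \<subseteq> carrier G"
  using Psi_elem H0car Kcar by (metis m_closed subset_iff)

lemma Psi_sub: "subgroup (Psi \<phi>) G"
proof (rule subgroupI)
  show "Psi \<phi> \<subseteq> carrier G" using Psi_car .
  have "\<one> \<in> \<phi> (Om #> \<one>)" using phi_one Om_one subgroup.one_closed[OF NNsub] by simp
  then have "\<one> \<otimes> \<one> \<in> Psi \<phi>" unfolding Psi_def using one_H0 by blast
  then show "Psi \<phi> \<noteq> {}" by blast
next
  fix x assume "x \<in> Psi \<phi>"
  then obtain h k where hk: "h \<in> H0" "k \<in> K" "k \<in> \<phi> (Om #> h)" "x = h \<otimes> k" by (rule Psi_elem)
  have c: "h \<in> carrier G" "k \<in> carrier G" using hk H0car Kcar by auto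
  have ih: "inv h \<in> H0" using hk subgroup.m_inv_closed[OF H0sub] by auto
  obtain j where j: "j \<in> K" "j \<in> \<phi> (Om #> inv h)" "\<phi> (Om #> inv h) = NN #> j"
    using cE_ne[OF phiE_H0[OF ih]] by blast
  have jc: "j \<in> carrier G" using j Kcar by auto
  have ceq: "\<phi> (Om #> h) = NN #> k" using cE_mem[OF phiE_H0[OF hk(1)] hk(3)] by simp
  have "\<phi> (Om #> (h \<otimes> inv h)) = \<phi> (Om #> h) <#> \<phi> (Om #> inv h)" using phi_mult hk ih by blast
  then have "NN = NN #> (k \<otimes> j)" using c jc ceq j phi_one Om_one rcos_sumN by simp
  moreover have "NN #> \<one> = NN" using coset_mult_one[of NN] Kcar by blast
  ultimately have "NN #> (k \<otimes> j) = NN #> \<one>" by simp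
  then have "k \<otimes> j \<in> NN" using rcos_eq_iff[OF NNsub, of "k \<otimes> j" \<one>] c jc by simp
  then have "inv (k \<otimes> j) \<in> NN" using subgroup.m_inv_closed[OF NNsub] by blast
  then have "inv k \<otimes> inv j \<in> NN" using c jc by (simp add: inv_mult)
  then have "inv k \<in> NN #> j" using rcos_mem_iff[OF NNsub jc] c by simp
  then have "inv k \<in> \<phi> (Om #> inv h)" using j by simp
  moreover have "inv x = inv h \<otimes> inv k" using hk c by (simp add: inv_mult)
  ultimately show "inv x \<in> Psi \<phi>" unfolding Psi_def using ih by blast
next
  fix x y assume "x \<in> Psi \<phi>" "y \<in> Psi \<phi>"
  then obtain h k h' k' where hk: "h \<in> H0" "k \<in> K" "k \<in> \<phi> (Om #> h)" "x = h \<otimes> k"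
    and hk': "h' \<in> H0" "k' \<in> K" "k' \<in> \<phi> (Om #> h')" "y = h' \<otimes> k'" by (metis Psi_elem)
  have c: "h \<in> carrier G" "k \<in> carrier G" "h' \<in> carrier G" "k' \<in> carrier G" using hk hk' H0car Kcar by auto
  have "k \<otimes> k' \<in> \<phi> (Om #> h) <#> \<phi> (Om #> h')" using hk hk' unfolding set_mult_def by blast
  then have "k \<otimes> k' \<in> \<phi> (Om #> (h \<otimes> h'))" using phi_mult hk hk' by simp
  moreover have "h \<otimes> h' \<in> H0" using hk hk' subgroup.m_closed[OF H0sub] by auto
  moreover have "x \<otimes> y = (h \<otimes> h') \<otimes> (k \<otimes> k')" using hk hk' c comm4 by simp
  ultimately show "x \<otimes> y \<in> Psi \<phi>" unfolding Psi_def by blast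
qed

end

context
  fixes \<phi> assumes phi: "\<phi> \<in> Hom"
begin

lemma Psi_local:
  assumes y: "y \<in> Psi \<phi>"
  shows "Psi \<phi> \<inter> (Om #> y) = R #> y"
proof -
  obtain h k where hk: "h \<in> H0" "k \<in> K" "k \<in> \<phi> (Om #> h)" "y = h \<otimes> k" using Psi_elem[OF phi y] by blast
  have c: "h \<in> carrier G" "k \<in> carrier G" using hk H0car Kcar by auto
  have yc: "y \<in> carrier G" using c hk by simp
  have ceq: "\<phi> (Om #> h) = NN #> k" using cE_mem[OF phiE_H0[OF phi hk(1)] hk(3)] by simp
  show ?thesis
  proof
    show "Psi \<phi> \<inter> (Om #> y) \<subseteq> R #> y"
    proof
      fix x assume x: "x \<in> Psi \<phi> \<inter> (Om #> y)"
      then obtain h' k' where hk': "h' \<in> H0" "k' \<in> K" "k' \<in> \<phi> (Om #> h')" "x = h' \<otimes> k'"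
        using Psi_elem[OF phi] by blast
      have c': "h' \<in> carrier G" "k' \<in> carrier G" using hk' H0car Kcar by auto
      have xc: "x \<in> carrier G" using c' hk' by simp
      have "x \<otimes> inv y \<in> Om" using x rcos_mem_iff[OF Omsub yc xc] by simp
      moreover have split: "x \<otimes> inv y = (h' \<otimes> inv h) \<otimes> (k' \<otimes> inv k)"
        using hk hk' c c' divmix by simp
      moreover have kk: "k' \<otimes> inv k \<in> K"
        using hk hk' subgroup.m_closed[OF Ksub] subgroup.m_inv_closed[OF Ksub] by auto
      ultimately have "(h' \<otimes> inv h) \<otimes> (k' \<otimes> inv k) \<otimes> inv (k' \<otimes> inv k) \<in> Om"
        using KOm subgroup.m_closed[OF Omsub] subgroup.m_inv_closed[OF Omsub] by auto
      then have "h' \<otimes> inv h \<in> Om" using c c' solve2 by simp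
      moreover have "h' \<otimes> inv h \<in> H0"
        using hk hk' subgroup.m_closed[OF H0sub] subgroup.m_inv_closed[OF H0sub] by auto
      ultimately have r: "h' \<otimes> inv h \<in> R" using H0Om by auto
      then have "Om #> h' = Om #> h" using OmH0_eq[OF hk(1) hk'(1)] by simp
      then have "k' \<in> NN #> k" using hk' ceq by simp
      then have "k' \<otimes> inv k \<in> NN" using rcos_mem_iff[OF NNsub c(2) c'(2)] by simp
      then have "(h' \<otimes> inv h) \<otimes> (k' \<otimes> inv k) \<in> R" using r subgroup.m_closed[OF Rsub] by auto
      then have "x \<otimes> inv y \<in> R" using split by simp
      then show "x \<in> R #> y" using rcos_mem_iff[OF Rsub yc xc] by simp
    qed
    show "R #> y \<subseteq> Psi \<phi> \<inter> (Om #> y)"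
    proof
      fix x assume "x \<in> R #> y"
      then obtain r where r: "r \<in> R" "x = r \<otimes> y" unfolding r_coset_def by blast
      have rc: "r \<in> carrier G" using r Rcar by auto
      have rh: "r \<otimes> h \<in> H0" using r hk H0Om subgroup.m_closed[OF H0sub] by auto
      have "(r \<otimes> h) \<otimes> inv h = r" using rc c by (simp add: m_assoc)
      then have "Om #> (r \<otimes> h) = Om #> h" using OmH0_eq[OF hk(1) rh] r by simp
      then have "k \<in> \<phi> (Om #> (r \<otimes> h))" using hk by simp
      moreover have "x = (r \<otimes> h) \<otimes> k" using r hk rc c by (simp add: m_assoc)
      ultimately have "x \<in> Psi \<phi>" unfolding Psi_def using rh by blast
      moreover have "x \<in> Om #> y" using r ROm unfolding r_coset_def by blast
      ultimately show "x \<in> Psi \<phi> \<inter> (Om #> y)" by blast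
    qed
  qed
qed

lemma Psi_closed: "closedin T (Psi \<phi>)"
proof -
  have "openin T (carrier G - Psi \<phi>)"
  proof (rule openin_subopen[THEN iffD2], intro ballI)
    fix x assume x: "x \<in> carrier G - Psi \<phi>"
    then have xc: "x \<in> carrier G" by blast
    have ox: "openin T (Om #> x)" using open_tr[OF Omo xc] .
    have xx: "x \<in> Om #> x" using rcos_self[OF xc Omsub] .
    show "\<exists>T'. openin T T' \<and> x \<in> T' \<and> T' \<subseteq> carrier G - Psi \<phi>"
    proof (cases "Psi \<phi> \<inter> (Om #> x) = {}")
      case True
      then show ?thesis using ox xx rcos_carrier[OF Omsub xc] by blast
    next
      case False
      then obtain y where y: "y \<in> Psi \<phi>" "y \<in> Om #> x" by blast
      have eqy: "Om #> y = Om #> x" using rcos_same[OF Omsub xc y(2)] .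
      have loc: "Psi \<phi> \<inter> (Om #> x) = R #> y" using Psi_local[OF y(1)] eqy by simp
      have yc: "y \<in> carrier G" using y Psi_car[OF phi] by blast
      have "closedin T (R #> y)" using closed_tr[OF Rc yc] .
      then have o: "openin T ((Om #> x) - (R #> y))" using ox by blast
      have "x \<notin> R #> y" using x loc by blast
      then have "x \<in> (Om #> x) - (R #> y)" using xx by blast
      moreover have "(Om #> x) - (R #> y) \<subseteq> carrier G - Psi \<phi>"
        using loc rcos_carrier[OF Omsub xc] by blast
      ultimately show ?thesis using o by blast
    qed
  qed
  then show ?thesis unfolding closedin_def using Psi_car[OF phi] top by simp
qed

lemma Psi_Om: "Psi \<phi> \<inter> Om = R"
proof -
  have "\<one> \<in> Psi \<phi>" using subgroup.one_closed[OF Psi_sub[OF phi]] .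
  from Psi_local[OF this] show ?thesis using Om_one coset_mult_one[of R] Rcar by simp
qed

lemma Psi_M: "Psi \<phi> \<subseteq> M \<and> (\<forall>m\<in>M. \<exists>p\<in>Psi \<phi>. \<exists>k\<in>K. m = p \<otimes> k)"
proof
  show "Psi \<phi> \<subseteq> M"
  proof
    fix x assume "x \<in> Psi \<phi>"
    then obtain h k where hk: "h \<in> H0" "k \<in> K" "x = h \<otimes> k" using Psi_elem[OF phi] by blast
    then show "x \<in> M" using H0M KM subgroup.m_closed[OF Msub] by auto
  qed
  show "\<forall>m\<in>M. \<exists>p\<in>Psi \<phi>. \<exists>k\<in>K. m = p \<otimes> k"
  proof
    fix m assume "m \<in> M"
    then obtain h k0 where hk: "h \<in> H0" "k0 \<in> K" "m = h \<otimes> k0" using H0cov by blast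
    obtain k1 where k1: "k1 \<in> K" "k1 \<in> \<phi> (Om #> h)" using cE_ne[OF phiE_H0[OF phi hk(1)]] by blast
    have c: "h \<in> carrier G" "k0 \<in> carrier G" "k1 \<in> carrier G" using hk k1 H0car Kcar by auto
    have "h \<otimes> k1 \<in> Psi \<phi>" unfolding Psi_def using hk k1 by blast
    moreover have "inv k1 \<otimes> k0 \<in> K" using hk k1 subgroup.m_closed[OF Ksub] subgroup.m_inv_closed[OF Ksub] by auto
    moreover have "m = (h \<otimes> k1) \<otimes> (inv k1 \<otimes> k0)" using hk c by (simp add: m_assoc solve4)
    ultimately show "\<exists>p\<in>Psi \<phi>. \<exists>k\<in>K. m = p \<otimes> k" by blast
  qed
qed

lemma Psi_fiber: "Psi \<phi> \<in> fiberset"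
  using Psi_sub[OF phi] Psi_closed Psi_Om Psi_M imgcond[OF Psi_sub[OF phi]]
  unfolding closed_subgroups_def by auto

lemma phi_rep: "h \<in> H0 \<Longrightarrow> \<phi> (Om #> h) = {k \<in> K. h \<otimes> k \<in> Psi \<phi>}"
  using mem_Psi[OF phi] phi_sub[OF phi] by auto

end

lemma Psi_inj:
  assumes "\<phi> \<in> Hom" "\<psi> \<in> Hom" "Psi \<phi> = Psi \<psi>"
  shows "\<phi> = \<psi>"
proof (rule extensionalityI)
  show "\<phi> \<in> extensional (carrier D)" "\<psi> \<in> extensional (carrier D)"
    using assms unfolding cont_homs_def by auto
  fix d assume "d \<in> carrier D"
  then obtain h where "h \<in> H0" "d = Om #> h" using carrD_H0 by auto
  then show "\<phi> d = \<psi> d" using phi_rep[OF assms(1)] phi_rep[OF assms(2)] assms(3) by simp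
qed


context
  fixes H assumes H: "H \<in> fiberset"
begin

lemma Hsub: "subgroup H G" and Hcl: "closedin T H" and HOm: "H \<inter> Om = R"
  and HM: "H \<subseteq> M" and Hcov: "\<forall>m\<in>M. \<exists>p\<in>H. \<exists>k\<in>K. m = p \<otimes> k"
  using H imgcond unfolding closed_subgroups_def by auto

lemma Hcar: "H \<subseteq> carrier G" using subgroup.subset[OF Hsub] .

lemma PhiA:
  assumes h: "h \<in> H0" shows "Phi H (Om #> h) = {k \<in> K. h \<otimes> k \<in> H}"
proof -
  have d: "Om #> h \<in> carrier D" using h carrD_H0 by auto
  have hc: "h \<in> carrier G" using h H0car by auto
  have "{k \<in> K. \<exists>h'\<in>H0. h' \<in> Om #> h \<and> h' \<otimes> k \<in> H} = {k \<in> K. h \<otimes> k \<in> H}"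
  proof
    show "{k \<in> K. h \<otimes> k \<in> H} \<subseteq> {k \<in> K. \<exists>h'\<in>H0. h' \<in> Om #> h \<and> h' \<otimes> k \<in> H}"
      using h rcos_self[OF hc Omsub] by blast
    show "{k \<in> K. \<exists>h'\<in>H0. h' \<in> Om #> h \<and> h' \<otimes> k \<in> H} \<subseteq> {k \<in> K. h \<otimes> k \<in> H}"
    proof
      fix k assume "k \<in> {k \<in> K. \<exists>h'\<in>H0. h' \<in> Om #> h \<and> h' \<otimes> k \<in> H}"
      then obtain h' where k: "k \<in> K" "h' \<in> H0" "h' \<in> Om #> h" "h' \<otimes> k \<in> H" by blast
      have c: "h' \<in> carrier G" "k \<in> carrier G" using k H0car Kcar by auto
      define r where "r = h' \<otimes> inv h"
      have "r \<in> Om" using k rcos_mem_iff[OF Omsub hc c(1)] r_def by simp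
      moreover have "r \<in> H0" using k h subgroup.m_closed[OF H0sub] subgroup.m_inv_closed[OF H0sub] r_def by auto
      ultimately have "r \<in> R" using H0Om by auto
      then have rH: "inv r \<in> H" using HOm subgroup.m_inv_closed[OF Hsub] by auto
      have rc: "r \<in> carrier G" using r_def c hc by simp
      have "r \<otimes> h = h'" using r_def c hc by (simp add: m_assoc)
      then have "h' \<otimes> k = r \<otimes> (h \<otimes> k)" using rc hc c m_assoc[of r h k] by metis
      then have "h \<otimes> k = inv r \<otimes> (h' \<otimes> k)" using rc hc c solve3 by simp
      then have "h \<otimes> k \<in> H" using rH k subgroup.m_closed[OF Hsub] by simp
      then show "k \<in> {k \<in> K. h \<otimes> k \<in> H}" using k by blast
    qed
  qed
  then show ?thesis unfolding Phi_def using d by simp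
qed

lemma PhiB: "h \<in> H0 \<Longrightarrow> \<exists>k\<in>K. h \<otimes> k \<in> H"
proof -
  assume h: "h \<in> H0"
  then obtain p k0 where pk: "p \<in> H" "k0 \<in> K" "h = p \<otimes> k0" using Hcov H0M by blast
  have c: "p \<in> carrier G" "k0 \<in> carrier G" using pk Hcar Kcar by auto
  have "h \<otimes> inv k0 = p" using pk c solve2 by simp
  then have "h \<otimes> inv k0 \<in> H" using pk by simp
  moreover have "inv k0 \<in> K" using pk subgroup.m_inv_closed[OF Ksub] by auto
  ultimately show ?thesis by blast
qed

lemma PhiC:
  assumes h: "h \<in> H0" and k: "k \<in> K" "h \<otimes> k \<in> H"
  shows "{k' \<in> K. h \<otimes> k' \<in> H} = NN #> k"
proof
  have hc: "h \<in> carrier G" and kc: "k \<in> carrier G" using h k H0car Kcar by auto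
  show "{k' \<in> K. h \<otimes> k' \<in> H} \<subseteq> NN #> k"
  proof
    fix k' assume k': "k' \<in> {k' \<in> K. h \<otimes> k' \<in> H}"
    have k'c: "k' \<in> carrier G" using k' Kcar by auto
    have "h \<otimes> k' \<otimes> inv (h \<otimes> k) = (h \<otimes> inv h) \<otimes> (k' \<otimes> inv k)" using divmix hc kc k'c by simp
    then have eq: "h \<otimes> k' \<otimes> inv (h \<otimes> k) = k' \<otimes> inv k" using hc kc k'c by simp
    have "h \<otimes> k' \<otimes> inv (h \<otimes> k) \<in> H"
      using k k' subgroup.m_closed[OF Hsub] subgroup.m_inv_closed[OF Hsub] by auto
    moreover have "k' \<otimes> inv k \<in> K" using k k' subgroup.m_closed[OF Ksub] subgroup.m_inv_closed[OF Ksub] by auto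
    ultimately have "k' \<otimes> inv k \<in> NN" using eq HOm KOm by auto
    then show "k' \<in> NN #> k" using rcos_mem_iff[OF NNsub kc k'c] by simp
  qed
  show "NN #> k \<subseteq> {k' \<in> K. h \<otimes> k' \<in> H}"
  proof
    fix k' assume "k' \<in> NN #> k"
    then obtain n where n: "n \<in> NN" "k' = n \<otimes> k" unfolding r_coset_def by blast
    have nc: "n \<in> carrier G" using n Kcar by auto
    have "k' \<in> K" using n k subgroup.m_closed[OF Ksub] by auto
    moreover have "h \<otimes> k' = n \<otimes> (h \<otimes> k)" using n nc hc kc by (simp add: m_ac)
    moreover have "n \<in> H" using n HOm by auto
    ultimately show "k' \<in> {k' \<in> K. h \<otimes> k' \<in> H}" using k subgroup.m_closed[OF Hsub] by auto
  qed
qed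

lemma PhiE: "h \<in> H0 \<Longrightarrow> \<exists>k\<in>K. Phi H (Om #> h) = NN #> k \<and> h \<otimes> k \<in> H"
  using PhiA PhiB PhiC by metis

lemma Phi_Hom: "Phi H \<in> Hom"
proof -
  have vals: "Phi H d \<in> carrier E" if dD: "d \<in> carrier D" for d
  proof -
    obtain h where h: "h \<in> H0" "d = Om #> h" using dD carrD_H0 by auto
    then obtain k where "k \<in> K" "Phi H (Om #> h) = NN #> k" using PhiE by blast
    then show ?thesis using h carrE by auto
  qed
  have "Phi H \<in> extensional (carrier D)" unfolding Phi_def by simp
  moreover have "Phi H \<in> carrier D \<rightarrow> carrier E" using vals by blast
  ultimately have "Phi H \<in> topspace P" unfolding topP PiE_def by blast
  moreover have "\<forall>x\<in>carrier D. \<forall>y\<in>carrier D. Phi H (x <#> y) = Phi H x <#> Phi H y"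
  proof (intro ballI)
    fix x y assume "x \<in> carrier D" "y \<in> carrier D"
    then obtain a b where ab: "a \<in> H0" "b \<in> H0" "x = Om #> a" "y = Om #> b" using carrD_H0 by auto
    obtain ka where ka: "ka \<in> K" "Phi H (Om #> a) = NN #> ka" "a \<otimes> ka \<in> H" using PhiE ab by blast
    obtain kb where kb: "kb \<in> K" "Phi H (Om #> b) = NN #> kb" "b \<otimes> kb \<in> H" using PhiE ab by blast
    have c: "a \<in> carrier G" "b \<in> carrier G" "ka \<in> carrier G" "kb \<in> carrier G" using ab ka kb H0car Kcar by auto
    have abH: "a \<otimes> b \<in> H0" using ab subgroup.m_closed[OF H0sub] by auto
    have kk: "ka \<otimes> kb \<in> K" using ka kb subgroup.m_closed[OF Ksub] by auto
    have "(a \<otimes> b) \<otimes> (ka \<otimes> kb) = (a \<otimes> ka) \<otimes> (b \<otimes> kb)" using c comm4 by simp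
    then have inH: "(a \<otimes> b) \<otimes> (ka \<otimes> kb) \<in> H" using ka kb subgroup.m_closed[OF Hsub] by simp
    have "Phi H (Om #> (a \<otimes> b)) = NN #> (ka \<otimes> kb)" using PhiA[OF abH] PhiC[OF abH kk inH] by simp
    moreover have "x <#> y = Om #> (a \<otimes> b)" using ab rcos_sumOm c by simp
    moreover have "(NN #> ka) <#> (NN #> kb) = NN #> (ka \<otimes> kb)" using rcos_sumN c by simp
    ultimately show "Phi H (x <#> y) = Phi H x <#> Phi H y" using ab ka kb by simp
  qed
  ultimately have "Phi H \<in> {f \<in> topspace P. \<forall>x\<in>carrier D. \<forall>y\<in>carrier D. f (x <#> y) = f x <#> f y}"
    by blast
  then show ?thesis by (subst HomEq)
qed

lemma Psi_Phi: "Psi (Phi H) = H"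
proof
  show "Psi (Phi H) \<subseteq> H"
  proof
    fix x assume "x \<in> Psi (Phi H)"
    then obtain h k where "h \<in> H0" "k \<in> Phi H (Om #> h)" "x = h \<otimes> k" unfolding Psi_def by blast
    then show "x \<in> H" using PhiA by auto
  qed
  show "H \<subseteq> Psi (Phi H)"
  proof
    fix x assume x: "x \<in> H"
    then obtain h k where hk: "h \<in> H0" "k \<in> K" "x = h \<otimes> k" using HM H0cov by blast
    then have "k \<in> Phi H (Om #> h)" using PhiA x by auto
    then show "x \<in> Psi (Phi H)" unfolding Psi_def using hk by blast
  qed
qed

end

lemma Psi_image: "Psi ` Hom = fiberset"
proof
  show "Psi ` Hom \<subseteq> fiberset" using Psi_fiber by blast
  show "fiberset \<subseteq> Psi ` Hom"
  proof
    fix H assume H: "H \<in> fiberset"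
    have "H = Psi (Phi H)" using Psi_Phi[OF H] by simp
    then show "H \<in> Psi ` Hom" using Phi_Hom[OF H] by blast
  qed
qed


lemma PT_open: "openin P Op \<Longrightarrow> openin PT (Hom \<inter> Op)"
  unfolding pointwise_hom_topology_def by (rule openin_subtopology_Int2)

lemma Psi_CS: "\<phi> \<in> Hom \<Longrightarrow> Psi \<phi> \<in> closed_subgroups G T"
  using Psi_fiber by blast

lemma pre_open:
  assumes U: "openin T U"
  shows "openin PT {\<phi> \<in> Hom. Psi \<phi> \<inter> U \<noteq> {}}"
proof -
  have Uc: "U \<subseteq> carrier G" using openin_subset[OF U] top by simp
  define Op where "Op = (\<Union>h\<in>H0. {f \<in> topspace P. f (Om #> h) \<in> {c \<in> carrier E. c \<inter> (U #> inv h) \<noteq> {}}})"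
  have "openin P Op" unfolding Op_def
  proof (rule openin_Union, clarify)
    fix h assume h: "h \<in> H0"
    have "Om #> h \<in> carrier D" using h carrD_H0 by auto
    moreover have "openin T (U #> inv h)" using open_tr[OF U] h H0car by auto
    ultimately show "openin P {f \<in> topspace P. f (Om #> h) \<in> {c \<in> carrier E. c \<inter> (U #> inv h) \<noteq> {}}}"
      using evopen qopen by blast
  qed
  moreover have "{\<phi> \<in> Hom. Psi \<phi> \<inter> U \<noteq> {}} = Hom \<inter> Op"
  proof (intro equalityI subsetI)
    fix \<phi> assume "\<phi> \<in> {\<phi> \<in> Hom. Psi \<phi> \<inter> U \<noteq> {}}"
    then have phi: "\<phi> \<in> Hom" and ne: "Psi \<phi> \<inter> U \<noteq> {}" by auto
    then obtain x where x: "x \<in> Psi \<phi>" "x \<in> U" by blast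
    then obtain h k where hk: "h \<in> H0" "k \<in> K" "k \<in> \<phi> (Om #> h)" "x = h \<otimes> k" using Psi_elem[OF phi] by blast
    have c: "h \<in> carrier G" "k \<in> carrier G" using hk H0car Kcar by auto
    have "k = x \<otimes> inv h" using hk c solve1 by simp
    then have "k \<in> U #> inv h" unfolding r_coset_def using x by blast
    moreover have "\<phi> (Om #> h) \<in> carrier E" using phiE_H0[OF phi hk(1)] .
    moreover have "\<phi> \<in> topspace P" using phi HomEq by blast
    ultimately have "\<phi> \<in> Op" unfolding Op_def using hk by blast
    then show "\<phi> \<in> Hom \<inter> Op" using phi by blast
  next
    fix \<phi> assume "\<phi> \<in> Hom \<inter> Op"
    then obtain h where phi: "\<phi> \<in> Hom" and h: "h \<in> H0" and ne: "\<phi> (Om #> h) \<inter> (U #> inv h) \<noteq> {}"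
      unfolding Op_def by blast
    then obtain k where k: "k \<in> \<phi> (Om #> h)" "k \<in> U #> inv h" by blast
    then obtain u where u: "u \<in> U" "k = u \<otimes> inv h" unfolding r_coset_def by blast
    have c: "h \<in> carrier G" "u \<in> carrier G" using h u H0car Uc by auto
    have "h \<otimes> k = u" using u c hC by simp
    moreover have "h \<otimes> k \<in> Psi \<phi>" unfolding Psi_def using h k by blast
    ultimately show "\<phi> \<in> {\<phi> \<in> Hom. Psi \<phi> \<inter> U \<noteq> {}}" using phi u by blast
  qed
  ultimately show ?thesis using PT_open by simp
qed

definition SS :: "'a set \<Rightarrow> 'a \<Rightarrow> 'a set" where
  "SS C h = K \<inter> ((C <#> R) #> inv h)"

lemma SS_open:
  assumes C: "compactin T C" and h: "h \<in> carrier G"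
  shows "openin TE {e \<in> carrier E. e \<inter> SS C h = {}}"
proof (rule qclosed)
  show "SS C h \<subseteq> K" unfolding SS_def by blast
  have Cc: "C \<subseteq> carrier G" using compactin_subset_topspace[OF C] top by simp
  have "closedin T ((C <#> R) #> inv h)" using closed_tr[OF compact_mult_closed[OF C Rc]] h by simp
  then show "closedin T (SS C h)" unfolding SS_def using Kclosed by blast
  fix s n assume s: "s \<in> SS C h" and n: "n \<in> NN"
  then obtain c r where cr: "c \<in> C" "r \<in> R" "s = c \<otimes> r \<otimes> inv h" "s \<in> K"
    unfolding SS_def r_coset_def set_mult_def by blast
  have cc: "c \<in> carrier G" "r \<in> carrier G" "n \<in> carrier G" using cr n Cc Rcar Kcar by auto
  have "s \<otimes> n = c \<otimes> (r \<otimes> n) \<otimes> inv h" using cr cc h hD by simp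
  moreover have "r \<otimes> n \<in> R" using cr n subgroup.m_closed[OF Rsub] by auto
  ultimately have "s \<otimes> n \<in> (C <#> R) #> inv h" unfolding r_coset_def set_mult_def using cr by blast
  moreover have "s \<otimes> n \<in> K" using cr n subgroup.m_closed[OF Ksub] by auto
  ultimately show "s \<otimes> n \<in> SS C h" unfolding SS_def by blast
qed

lemma pre_compact:
  assumes C: "compactin T C"
  shows "openin PT {\<phi> \<in> Hom. Psi \<phi> \<inter> C = {}}"
proof -
  have Cc: "C \<subseteq> carrier G" using compactin_subset_topspace[OF C] top by simp
  have opn: "\<forall>U\<in>(\<lambda>x. Om #> x) ` C. openin T U" using open_tr[OF Omo] Cc by auto
  have cov: "C \<subseteq> \<Union>((\<lambda>x. Om #> x) ` C)" using rcos_self[OF _ Omsub] Cc by blast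
  have cmp: "\<forall>\<U>. (\<forall>U\<in>\<U>. openin T U) \<and> C \<subseteq> \<Union>\<U> \<longrightarrow> (\<exists>\<F>. finite \<F> \<and> \<F> \<subseteq> \<U> \<and> C \<subseteq> \<Union>\<F>)"
    using C unfolding compactin_def by (rule conjunct2)
  obtain F where F: "finite F" "F \<subseteq> (\<lambda>x. Om #> x) ` C" "C \<subseteq> \<Union>F"
    using cmp[rule_format, OF conjI[OF opn cov]] by blast
  define F' where "F' = {c \<in> F. c \<inter> H0 \<noteq> {}}"
  define hc where "hc c = (SOME h. h \<in> c \<inter> H0)" for c
  have hc: "hc c \<in> c \<inter> H0" if "c \<in> F'" for c
  proof -
    have "\<exists>h. h \<in> c \<inter> H0" using that unfolding F'_def by blast
    then show ?thesis unfolding hc_def by (rule someI_ex)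
  qed
  have fF': "finite F'" using F unfolding F'_def by simp
  define Op where "Op = topspace P \<inter> \<Inter>((\<lambda>c. {f \<in> topspace P. f (Om #> hc c) \<in> {e \<in> carrier E. e \<inter> SS C (hc c) = {}}}) ` F')"
  have "openin P Op" unfolding Op_def
  proof (rule openin_Int_Inter)
    show "finite ((\<lambda>c. {f \<in> topspace P. f (Om #> hc c) \<in> {e \<in> carrier E. e \<inter> SS C (hc c) = {}}}) ` F')"
      using fF' by simp
    show "openin P (topspace P)" by (rule openin_topspace)
    fix Xs assume "Xs \<in> (\<lambda>c. {f \<in> topspace P. f (Om #> hc c) \<in> {e \<in> carrier E. e \<inter> SS C (hc c) = {}}}) ` F'"
    then obtain c where c: "c \<in> F'" "Xs = {f \<in> topspace P. f (Om #> hc c) \<in> {e \<in> carrier E. e \<inter> SS C (hc c) = {}}}" by blast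
    have "hc c \<in> H0" using hc[OF c(1)] by blast
    then have "Om #> hc c \<in> carrier D" "hc c \<in> carrier G" using carrD_H0 H0car by auto
    then show "openin P Xs" using c(2) evopen[OF _ SS_open[OF C]] by presburger
  qed
  moreover have "{\<phi> \<in> Hom. Psi \<phi> \<inter> C = {}} = Hom \<inter> Op"
  proof (intro equalityI subsetI)
    fix \<phi> assume "\<phi> \<in> {\<phi> \<in> Hom. Psi \<phi> \<inter> C = {}}"
    then have phi: "\<phi> \<in> Hom" and emp: "Psi \<phi> \<inter> C = {}" by auto
    have phiP: "\<phi> \<in> topspace P" using phi HomEq by blast
    have "\<phi> \<in> {f \<in> topspace P. f (Om #> hc c) \<in> {e \<in> carrier E. e \<inter> SS C (hc c) = {}}}" if c: "c \<in> F'" for c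
    proof -
      define h where "h = hc c"
      have h: "h \<in> H0" using hc[OF c] h_def by blast
      have hcar: "h \<in> carrier G" using h H0car by auto
      have "\<phi> (Om #> h) \<inter> SS C h = {}"
      proof (rule ccontr)
        assume "\<phi> (Om #> h) \<inter> SS C h \<noteq> {}"
        then obtain k where k: "k \<in> \<phi> (Om #> h)" "k \<in> SS C h" by blast
        then obtain x r where xr: "x \<in> C" "r \<in> R" "k = x \<otimes> r \<otimes> inv h"
          unfolding SS_def r_coset_def set_mult_def by blast
        have xc: "x \<in> carrier G" "r \<in> carrier G" using xr Cc Rcar by auto
        have rH0: "r \<in> H0" "inv r \<in> H0" using xr H0Om subgroup.m_inv_closed[OF H0sub] by auto
        define h' where "h' = inv r \<otimes> h"
        have h': "h' \<in> H0" using rH0 h subgroup.m_closed[OF H0sub] h'_def by auto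
        have "h' \<otimes> inv h = inv r" using h'_def xc hcar by (simp add: m_assoc)
        moreover have "inv r \<in> R" using xr subgroup.m_inv_closed[OF Rsub] by auto
        ultimately have "Om #> h' = Om #> h" using OmH0_eq[OF h h'] by simp
        then have "k \<in> \<phi> (Om #> h')" using k by simp
        then have "h' \<otimes> k \<in> Psi \<phi>" unfolding Psi_def using h' by blast
        moreover have "h' \<otimes> k = x" using h'_def xr xc hcar hA by simp
        ultimately show False using emp xr by blast
      qed
      then show ?thesis using phiP phiE_H0[OF phi h] h_def by simp
    qed
    then have "\<phi> \<in> \<Inter>((\<lambda>c. {f \<in> topspace P. f (Om #> hc c) \<in> {e \<in> carrier E. e \<inter> SS C (hc c) = {}}}) ` F')"
      by (intro InterI) blast
    then have "\<phi> \<in> Op" unfolding Op_def using phiP by (rule IntI[rotated])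
    then show "\<phi> \<in> Hom \<inter> Op" using phi by (rule IntI[rotated])
  next
    fix \<phi> assume A: "\<phi> \<in> Hom \<inter> Op"
    then have phi: "\<phi> \<in> Hom" by blast
    have inI: "\<phi> \<in> \<Inter>((\<lambda>c. {f \<in> topspace P. f (Om #> hc c) \<in> {e \<in> carrier E. e \<inter> SS C (hc c) = {}}}) ` F')"
      using A unfolding Op_def by (meson IntD1 IntD2)
    have cond: "\<phi> (Om #> hc c) \<inter> SS C (hc c) = {}" if cF: "c \<in> F'" for c
    proof -
      have "\<phi> \<in> {f \<in> topspace P. f (Om #> hc c) \<in> {e \<in> carrier E. e \<inter> SS C (hc c) = {}}}"
        using InterD[OF inI imageI[OF cF]] .
      then show ?thesis by simp
    qed
    have "Psi \<phi> \<inter> C = {}"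
    proof (rule ccontr)
      assume "Psi \<phi> \<inter> C \<noteq> {}"
      then obtain x where x: "x \<in> Psi \<phi>" "x \<in> C" by blast
      then obtain h k where hk: "h \<in> H0" "k \<in> K" "k \<in> \<phi> (Om #> h)" "x = h \<otimes> k"
        using Psi_elem[OF phi] by blast
      have c: "h \<in> carrier G" "k \<in> carrier G" using hk H0car Kcar by auto
      obtain cc where cc: "cc \<in> F" "x \<in> cc" using x F by blast
      then obtain x0 where x0: "x0 \<in> C" "cc = Om #> x0" using F by blast
      have x0c: "x0 \<in> carrier G" "x \<in> carrier G" using x0 x Cc by auto
      have "x \<otimes> inv x0 \<in> Om" using rcos_mem_iff[OF Omsub x0c] cc x0 by simp
      moreover have "inv k \<in> Om" using hk KOm subgroup.m_inv_closed[OF Omsub] by auto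
      ultimately have "(x \<otimes> inv x0) \<otimes> inv k \<in> Om" using subgroup.m_closed[OF Omsub] by auto
      moreover have "h = x \<otimes> inv k" using hk c solve2 by simp
      ultimately have "h \<otimes> inv x0 \<in> Om" using hE x0c c by simp
      then have hcc: "h \<in> cc" using rcos_mem_iff[OF Omsub x0c(1) c(1)] x0 by simp
      then have ccF': "cc \<in> F'" unfolding F'_def using cc hk by blast
      define h1 where "h1 = hc cc"
      have h1: "h1 \<in> cc" "h1 \<in> H0" using hc[OF ccF'] h1_def by auto
      have h1c: "h1 \<in> carrier G" using h1 H0car by auto
      have "Om #> h = Om #> h1"
        using rcos_same[OF Omsub x0c(1)] hcc h1 x0 by metis
      then have r: "h \<otimes> inv h1 \<in> R" using OmH0_eq[OF h1(2) hk(1)] by simp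
      have kin: "k \<in> \<phi> (Om #> h1)" using hk \<open>Om #> h = Om #> h1\<close> by simp
      have "inv (h \<otimes> inv h1) \<in> R" using r subgroup.m_inv_closed[OF Rsub] by auto
      moreover have "k = x \<otimes> inv (h \<otimes> inv h1) \<otimes> inv h1" using hk c h1c hB by simp
      ultimately have "k \<in> (C <#> R) #> inv h1" unfolding r_coset_def set_mult_def using x by blast
      then have "k \<in> SS C h1" unfolding SS_def using hk by blast
      then show False using cond[OF ccF'] kin h1_def by blast
    qed
    then show "\<phi> \<in> {\<phi> \<in> Hom. Psi \<phi> \<inter> C = {}}" using phi by blast
  qed
  ultimately show ?thesis using PT_open by simp
qed


lemma Psi_cont: "continuous_map PT (chabauty G T) Psi"
  unfolding ch_def
proof (rule continuous_on_generated_topo)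
  show "Psi ` topspace PT \<subseteq> \<Union>SB" using UnionSB topPT Psi_CS by auto
  fix U assume "U \<in> SB"
  then consider C where "compactin T C" "U = {F \<in> CS. F \<inter> C = {}}"
    | V where "openin T V" "U = {F \<in> CS. F \<inter> V \<noteq> {}}" by blast
  then show "openin PT (Psi -` U \<inter> topspace PT)"
  proof cases
    case 1
    have "Psi -` U \<inter> topspace PT = {\<phi> \<in> Hom. Psi \<phi> \<inter> C = {}}" using 1 topPT Psi_CS by auto
    then show ?thesis using pre_compact[OF 1(1)] by simp
  next
    case 2
    have "Psi -` U \<inter> topspace PT = {\<phi> \<in> Hom. Psi \<phi> \<inter> V \<noteq> {}}" using 2 topPT Psi_CS by auto
    then show ?thesis using pre_open[OF 2(1)] by simp
  qed
qed

lemma main_homeo: "subtopology (chabauty G T) fiberset homeomorphic_space PT"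
proof -
  have top2: "topspace (subtopology (chabauty G T) fiberset) = fiberset" using topch by auto
  have "continuous_map PT (subtopology (chabauty G T) fiberset) Psi"
    unfolding continuous_map_in_subtopology using Psi_cont Psi_fiber topPT by auto
  moreover have "Hausdorff_space (subtopology (chabauty G T) fiberset)"
    using Hausdorff_space_subtopology[OF Haus_ch] .
  moreover have "Psi ` topspace PT = topspace (subtopology (chabauty G T) fiberset)"
    using top2 topPT Psi_image by simp
  moreover have "inj_on Psi (topspace PT)" unfolding topPT inj_on_def using Psi_inj by blast
  ultimately have "homeomorphic_map PT (subtopology (chabauty G T) fiberset) Psi"
    using compPT continuous_imp_homeomorphic_map by blast
  then show ?thesis using homeomorphic_map_imp_homeomorphic_space homeomorphic_space_sym by blast
qed


end


theorem proposition5p1: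
  fixes G :: "('a, 'b) monoid_scheme" and T :: "'a topology"
    and K \<Omega> M R :: "'a set"
  assumes LCA: "LCA_group G T"
    and K: "subgroup K G" "compactin T K"
    and \<Omega>: "subgroup \<Omega> G" "openin T \<Omega>" "K \<subseteq> \<Omega>"
    and R: "R \<in> closed_subgroups (G\<lparr>carrier := \<Omega>\<rparr>) (subtopology T \<Omega>)"
    and M: "M \<in> closed_subgroups G T" "K \<subseteq> M"
  defines "fiber \<equiv> {H \<in> closed_subgroups G T.
              H \<inter> \<Omega> = R \<and> (\<lambda>h. K #>\<^bsub>G\<^esub> h) ` H = (\<lambda>m. K #>\<^bsub>G\<^esub> m) ` M}"
    and "D \<equiv> (G\<lparr>carrier := M <#>\<^bsub>G\<^esub> \<Omega>\<rparr>) Mod \<Omega>"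
    and "TD \<equiv> quotient_group_topology (G\<lparr>carrier := M <#>\<^bsub>G\<^esub> \<Omega>\<rparr>)
                (subtopology T (M <#>\<^bsub>G\<^esub> \<Omega>)) \<Omega>"
    and "E \<equiv> (G\<lparr>carrier := K\<rparr>) Mod (K \<inter> R)"
    and "TE \<equiv> quotient_group_topology (G\<lparr>carrier := K\<rparr>) (subtopology T K) (K \<inter> R)"
  shows "compact_space (pointwise_hom_topology D TD E TE) \<and>
         (fiber = {} \<or>
          subtopology (chabauty G T) fiber homeomorphic_space pointwise_hom_topology D TD E TE)"
proof -
  have tg: "topological_group G T" and cg: "comm_group G" and Ha: "Hausdorff_space T"
    and lcs: "locally_compact_space T"
    using LCA unfolding LCA_group_def by auto
  have top: "topspace T = carrier G"
    and mc: "continuous_map (prod_topology T T) T (\<lambda>(x, y). x \<otimes>\<^bsub>G\<^esub> y)"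
    and ic: "continuous_map T T (\<lambda>x. inv\<^bsub>G\<^esub> x)"
    using tg unfolding topological_group_def by auto
  have tgG: "tgrp G T"
    using cg top mc ic by (simp add: tgrp_def tgrp_axioms_def)
  interpret tgrp G T by (rule tgG)
  have Omc: "closedin T \<Omega>" using open_subgroup_closed[OF \<Omega>(1) \<Omega>(2)] .
  have Rs: "subgroup R (G\<lparr>carrier := \<Omega>\<rparr>)" and Rcl: "closedin (subtopology T \<Omega>) R"
    using R unfolding closed_subgroups_def by auto
  have Rsub: "subgroup R G" using incl_subgroup[OF \<Omega>(1) Rs] .
  have ROm: "R \<subseteq> \<Omega>" using subgroup.subset[OF Rs] by simp
  have Rc: "closedin T R" using closedin_trans_full[OF Rcl Omc] .
  have Msub: "subgroup M G" and Mc: "closedin T M" using M(1) unfolding closed_subgroups_def by auto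
  have f0: "fib0 G T K \<Omega> M R"
    by (rule fib0.intro[OF tgG fib0_axioms.intro[OF Ha lcs K(1) K(2) \<Omega>(1) \<Omega>(2) \<Omega>(3) Rsub ROm Rc Msub Mc M(2)]])
  interpret fib0 G T K \<Omega> M R by (rule f0)
  show ?thesis
    unfolding assms(10-14)
  proof (intro conjI)
    show "compact_space (pointwise_hom_topology ((G\<lparr>carrier := M <#>\<^bsub>G\<^esub> \<Omega>\<rparr>) Mod \<Omega>)
      (quotient_group_topology (G\<lparr>carrier := M <#>\<^bsub>G\<^esub> \<Omega>\<rparr>) (subtopology T (M <#>\<^bsub>G\<^esub> \<Omega>)) \<Omega>)
      ((G\<lparr>carrier := K\<rparr>) Mod (K \<inter> R)) (quotient_group_topology (G\<lparr>carrier := K\<rparr>) (subtopology T K) (K \<inter> R)))"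
      using compPT .
    show "{H \<in> closed_subgroups G T. H \<inter> \<Omega> = R \<and> (\<lambda>h. K #>\<^bsub>G\<^esub> h) ` H = (\<lambda>m. K #>\<^bsub>G\<^esub> m) ` M} = {} \<or>
      subtopology (chabauty G T) {H \<in> closed_subgroups G T. H \<inter> \<Omega> = R \<and> (\<lambda>h. K #>\<^bsub>G\<^esub> h) ` H = (\<lambda>m. K #>\<^bsub>G\<^esub> m) ` M}
        homeomorphic_space
      pointwise_hom_topology ((G\<lparr>carrier := M <#>\<^bsub>G\<^esub> \<Omega>\<rparr>) Mod \<Omega>)
      (quotient_group_topology (G\<lparr>carrier := M <#>\<^bsub>G\<^esub> \<Omega>\<rparr>) (subtopology T (M <#>\<^bsub>G\<^esub> \<Omega>)) \<Omega>)
      ((G\<lparr>carrier := K\<rparr>) Mod (K \<inter> R)) (quotient_group_topology (G\<lparr>carrier := K\<rparr>) (subtopology T K) (K \<inter> R))"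
    proof (cases "{H \<in> closed_subgroups G T. H \<inter> \<Omega> = R \<and> (\<lambda>h. K #>\<^bsub>G\<^esub> h) ` H = (\<lambda>m. K #>\<^bsub>G\<^esub> m) ` M} = {}")
      case True then show ?thesis by blast
    next
      case False
      then obtain H0 where H0: "H0 \<in> closed_subgroups G T" "H0 \<inter> \<Omega> = R"
        "(\<lambda>h. K #>\<^bsub>G\<^esub> h) ` H0 = (\<lambda>m. K #>\<^bsub>G\<^esub> m) ` M" by blast
      have H0s: "subgroup H0 G" "closedin T H0" using H0(1) unfolding closed_subgroups_def by auto
      have cov: "H0 \<subseteq> M" "\<forall>m\<in>M. \<exists>h\<in>H0. \<exists>k\<in>K. m = h \<otimes>\<^bsub>G\<^esub> k"
        using imgcond[OF H0s(1)] H0(3) by auto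
      have cov2: "\<And>m. m \<in> M \<Longrightarrow> \<exists>h\<in>H0. \<exists>k\<in>K. m = h \<otimes>\<^bsub>G\<^esub> k" using cov(2) by blast
      interpret fib G T K \<Omega> M R H0
        by (rule fib.intro[OF f0 fib_axioms.intro[OF H0s(1) H0s(2) H0(2) cov(1) cov2]])
      show ?thesis using main_homeo by blast
    qed
  qed
qed

end
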